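(* Let $\alpha\in\alpha_0\mathbb{Z}$ with $|\alpha|<\frac{1}{\sqrt2}$. Then for every $s\in\mathbb{Z}$ and every $\Psi\in\mathcal D$, the series $$\Phi_{\alpha,s}\Psi:=\sum_{t\in\mathbb{R}}(Y_{\alpha,t}\otimes Y_{\alpha,t-s})\Psi$$ (which on each summand $\mathcal H_\beta\otimes\mathcal H_\beta$ has only countably many nonzero terms) converges in norm in $\hat{\mathcal H}\otimes\hat{\mathcal H}$; the same holds with $\alpha$ replaced by $-\alpha$. Hence every coefficient of the formal series $\tilde\psi^\alpha(w,w^{-1})=Y_\alpha(w)\otimes Y_\alpha(w^{-1})+Y_{-\alpha}(w)\otimes Y_{-\alpha}(w^{-1})=\sum_{s}(\Phi_{\alpha,s}+\Phi_{-\alpha,s})w^{-s}$ defines a linear operator on $\mathcal D$.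
   Context: For $\beta\in\mathbb{R}$ let $\mathcal H_\beta$ be the Hilbert space carrying a unitary representation of the Heisenberg algebra: operators $J_{\beta,n}$, $n\in\mathbb{Z}$, with $[J_{\beta,m},J_{\beta,n}]=m\,\delta_{m+n,0}$, $J_{\beta,n}^*=J_{\beta,-n}$, $J_{\beta,0}=\beta\cdot\mathbf 1$, and a cyclic unit vector $\Omega_\beta$ with $J_{\beta,n}\Omega_\beta=0$ for $n>0$; $\mathcal H_\beta$ is the closure of the span $\mathcal H_\beta^{\rm fin}$ of the vectors $J_{\beta,-n_1}\cdots J_{\beta,-n_k}\Omega_\beta$, $n_i>0$. Fix $\alpha_0\in\mathbb{R}$ with $0<|\alpha_0|\le1$ and set $\hat{\mathcal H}=\bigoplus_{j\in\mathbb{Z}}\mathcal H_{j\alpha_0}$, $\hat J_n=\bigoplus_j J_{j\alpha_0,n}$. For $\alpha\in\alpha_0\mathbb{Z}$ let $c_\alpha$ be the unitary on $\hat{\mathcal H}$ mapping $\mathcal H_\beta\to\mathcal H_{\beta+\alpha}$ by $c_\alpha \hat J_{-n_1}\cdots\hat J_{-n_k}\Omega_\beta=\hat J_{-n_1}\cdots\hat J_{-n_k}\Omega_{\beta+\alpha}$ ($n_i>0$). Define the formal series $E^{\pm}(\alpha,z)=\exp\bigl(\mp\sum_{n>0}\frac{\alpha\hat J_{\pm n}}{n}z^{\mp n}\bigr)$ and $Y_\alpha(z)=c_\alpha E^-(\alpha,z)E^+(\alpha,z)z^{\alpha\hat J_0}$, where $z^{\alpha\hat J_0}$ acts as $z^{\alpha\beta}$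 on $\mathcal H_\beta$. With $d=\alpha^2/2$ write $Y_\alpha(z)=\sum_{s\in\mathbb{R}}Y_{\alpha,s}z^{-s-d}$; the coefficient $Y_{\alpha,s}$ is a bounded operator (for $|\alpha|\le1$) mapping $\mathcal H_\beta$ into $\mathcal H_{\beta+\alpha}$, nonzero on $\mathcal H_\beta$ only for $s\in\mathbb{Z}-\alpha\beta-d$. The domain $\mathcal D$ is the algebraic direct sum $\bigoplus_{j\in\mathbb{Z},\mathrm{alg}}\mathcal H^{\rm fin}_{j\alpha_0}\otimes_{\mathrm{alg}}\mathcal H^{\rm fin}_{j\alpha_0}$, a dense subspace of $\tilde{\mathcal H}=\bigoplus_j\mathcal H_{j\alpha_0}\otimes\mathcal H_{j\alpha_0}\subset\hat{\mathcal H}\otimes\hat{\mathcal H}$. Substituting $z=w^{-1}$ in $Y_\alpha(w)\otimes Y_\alpha(z)$ formally gives $Y_\alpha(w)\otimes Y_\alpha(w^{-1})=\sum_{s}\bigl(\sum_t Y_{\alpha,t}\otimes Y_{\alpha,t-s}\bigr)w^{-s}$. *)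

theory Defs
  imports "HOL-Analysis.Analysis" "HOL-Library.Multiset"
begin

text \<open>A basis index (j, lam) stands for the vector
  J_{-n_1} ... J_{-n_k} Omega_{j alpha0} in H_{j alpha0}, where lam is the
  multiset (partition) of the positive integers n_1,...,n_k.  A (finite)
  vector of the direct sum is given by its coordinates with respect to these
  spanning vectors.\<close>

type_synonym idx = "int \<times> nat multiset"
type_synonym vec = "idx \<Rightarrow> complex"
type_synonym tidx = "idx \<times> idx"
type_synonym tvec = "tidx \<Rightarrow> complex"

definition lin_ext :: "('a \<Rightarrow> 'b \<Rightarrow> complex) \<Rightarrow> ('a \<Rightarrow> complex) \<Rightarrow> 'b \<Rightarrow> complex" where
  "lin_ext f \<psi> = (\<lambda>y. \<Sum>x\<in>{x. \<psi> x \<noteq> 0}. \<psi> x * f x y)"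

definition basis :: "'a \<Rightarrow> 'a \<Rightarrow> complex" where
  "basis x = (\<lambda>y. if y = x then 1 else 0)"

definition smul :: "complex \<Rightarrow> ('a \<Rightarrow> complex) \<Rightarrow> 'a \<Rightarrow> complex" where
  "smul c f = (\<lambda>y. c * f y)"

text \<open>Heisenberg modes: for n > 0, J_n (annihilation) and J_{-n} (creation),
  acting on the spanning vectors as forced by [J_m,J_n] = m delta_{m+n,0}
  and J_n Omega = 0 (n>0).\<close>
definition Jann :: "nat \<Rightarrow> vec \<Rightarrow> vec" where
  "Jann n = lin_ext (\<lambda>(j, lam). smul (of_nat (n * count lam n)) (basis (j, lam - {#n#})))"

definition Jcre :: "nat \<Rightarrow> vec \<Rightarrow> vec" where
  "Jcre n = lin_ext (\<lambda>(j, lam). basis (j, lam + {#n#}))"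

definition Jann_prod :: "nat multiset \<Rightarrow> vec \<Rightarrow> vec" where
  "Jann_prod \<rho> = foldr (\<lambda>n f. Jann n \<circ> f) (sorted_list_of_multiset \<rho>) id"

definition Jcre_prod :: "nat multiset \<Rightarrow> vec \<Rightarrow> vec" where
  "Jcre_prod \<rho> = foldr (\<lambda>n f. Jcre n \<circ> f) (sorted_list_of_multiset \<rho>) id"

text \<open>Coefficient of prod_n J_{n}^{m_n} in exp(sum_n a_n J_n X^n):
   prod_n a_n^{m_n} / m_n!.\<close>
definition expcoef :: "(nat \<Rightarrow> real) \<Rightarrow> nat multiset \<Rightarrow> real" where
  "expcoef a \<rho> = (\<Prod>n\<in>set_mset \<rho>. a n ^ count \<rho> n / fact (count \<rho> n))"

definition partitions :: "nat \<Rightarrow> nat multiset set" where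
  "partitions q = {\<rho>. 0 \<notin># \<rho> \<and> sum_mset \<rho> = q}"

text \<open>Eplus alpha q = coefficient of z^{-q} in E^+(alpha,z) = exp(- sum_{n>0} alpha J_n z^{-n}/n).\<close>
definition Eplus :: "real \<Rightarrow> nat \<Rightarrow> vec \<Rightarrow> vec" where
  "Eplus \<alpha> q \<psi> = (\<lambda>y. \<Sum>\<rho>\<in>partitions q.
      of_real (expcoef (\<lambda>n. - \<alpha> / real n) \<rho>) * Jann_prod \<rho> \<psi> y)"

text \<open>Eminus alpha p = coefficient of z^{p} in E^-(alpha,z) = exp(sum_{n>0} alpha J_{-n} z^{n}/n).\<close>
definition Eminus :: "real \<Rightarrow> nat \<Rightarrow> vec \<Rightarrow> vec" where
  "Eminus \<alpha> p \<psi> = (\<lambda>y. \<Sum>\<rho>\<in>partitions p.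
      of_real (expcoef (\<lambda>n. \<alpha> / real n) \<rho>) * Jcre_prod \<rho> \<psi> y)"

text \<open>c_alpha for alpha = k * alpha0: maps H_{j alpha0} to H_{(j+k) alpha0}.\<close>
definition cshift :: "int \<Rightarrow> vec \<Rightarrow> vec" where
  "cshift k \<psi> = (\<lambda>(j, lam). \<psi> (j - k, lam))"

text \<open>Y_{alpha,s} (alpha = k*alpha0) on a spanning vector of H_beta, beta = j*alpha0:
  the coefficient of z^{-s-d} in c_alpha E^-(alpha,z) E^+(alpha,z) z^{alpha beta},
  i.e. the sum of c_alpha E^-_p E^+_q over p - q + alpha beta = -s - d
  (E^+_q vanishes on this vector for q > |lam|).\<close>
definition Ybasis :: "real \<Rightarrow> int \<Rightarrow> real \<Rightarrow> idx \<Rightarrow> vec" where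
  "Ybasis \<alpha>0 k s x = (case x of (j, lam) \<Rightarrow>
     (let \<alpha> = of_int k * \<alpha>0; \<beta> = of_int j * \<alpha>0; d = \<alpha>\<^sup>2 / 2 in
      cshift k (\<lambda>y. \<Sum>q\<in>{0..sum_mset lam}.
        (let p = real q - s - d - \<alpha> * \<beta> in
          if p \<in> \<nat> then Eminus \<alpha> (nat \<lfloor>p\<rfloor>) (Eplus \<alpha> q (basis (j, lam))) y else 0))))"

definition Ycoef :: "real \<Rightarrow> int \<Rightarrow> real \<Rightarrow> vec \<Rightarrow> vec" where
  "Ycoef \<alpha>0 k s = lin_ext (Ybasis \<alpha>0 k s)"

definition tensor_apply :: "(vec \<Rightarrow> vec) \<Rightarrow> (vec \<Rightarrow> vec) \<Rightarrow> tvec \<Rightarrow> tvec" where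
  "tensor_apply A B = lin_ext (\<lambda>(x, y). (\<lambda>(x', y'). A (basis x) x' * B (basis y) y'))"

definition Dom :: "tvec set" where
  "Dom = {\<Psi>. finite {x. \<Psi> x \<noteq> 0} \<and>
     (\<forall>j lam j' mu. \<Psi> ((j, lam), (j', mu)) \<noteq> 0 \<longrightarrow> j = j' \<and> 0 \<notin># lam \<and> 0 \<notin># mu)}"

text \<open>Norm: the spanning vectors are orthogonal with
  ||J_{-lam} Omega||^2 = prod_n n^{m_n} m_n!.\<close>
definition weight :: "nat multiset \<Rightarrow> real" where
  "weight lam = (\<Prod>n\<in>set_mset lam. real n ^ count lam n * fact (count lam n))"

definition tweight :: "tidx \<Rightarrow> real" where
  "tweight x = (case x of ((j, lam), (j', mu)) \<Rightarrow> weight lam * weight mu)"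

definition in_tspace :: "tvec \<Rightarrow> bool" where
  "in_tspace f \<longleftrightarrow> (\<lambda>x. tweight x * (cmod (f x))\<^sup>2) summable_on UNIV"

definition tdist :: "tvec \<Rightarrow> tvec \<Rightarrow> real" where
  "tdist f g = sqrt (\<Sum>\<^sub>\<infinity>x. tweight x * (cmod (f x - g x))\<^sup>2)"

text \<open>Norm convergence of the series sum_{t in R} v t to L in H^ (x) H^
  (unconditional: net of finite partial sums).\<close>
definition norm_conv :: "(real \<Rightarrow> tvec) \<Rightarrow> tvec \<Rightarrow> bool" where
  "norm_conv v L \<longleftrightarrow> in_tspace L \<and>
     ((\<lambda>F. tdist (\<lambda>x. \<Sum>t\<in>F. v t x) L) \<longlongrightarrow> 0) (finite_subsets_at_top UNIV)"

definition Phi_term :: "real \<Rightarrow> int \<Rightarrow> int \<Rightarrow> tvec \<Rightarrow> real \<Rightarrow> tvec" where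
  "Phi_term \<alpha>0 k s \<Psi> t = tensor_apply (Ycoef \<alpha>0 k t) (Ycoef \<alpha>0 k (t - of_int s)) \<Psi>"

end

theory Submission
  imports Defs
begin


lemma sum_delta_supp:
  fixes v :: "'a \<Rightarrow> complex"
  assumes "finite S" "\<And>x. x \<notin> S \<Longrightarrow> v x = 0"
  shows "(\<Sum>x\<in>S. v x * (if x = x0 then c else 0)) = v x0 * c"
proof -
  have "(\<Sum>x\<in>S. v x * (if x = x0 then c else 0)) = (\<Sum>x\<in>S. if x = x0 then v x0 * c else 0)"
    by (rule sum.cong) simp_all
  also have "\<dots> = (if x0 \<in> S then v x0 * c else 0)" using assms(1) by (simp add: sum.delta)
  also have "\<dots> = v x0 * c" using assms(2) by auto
  finally show ?thesis .
qed

lemma lin_ext_basis: "lin_ext f (basis x) = f x"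
  by (auto simp: lin_ext_def basis_def)

lemma Jcre_term: "(case x of (j, lam) \<Rightarrow> basis (j, lam + {#n#})) (j, \<mu>) =
   (if x = (j, \<mu> - {#n#}) then (if n \<in># \<mu> then 1 else 0) else (0::complex))"
  by (cases x; cases "n \<in># \<mu>") (auto simp: basis_def insert_DiffM)

lemma Jcre_formula:
  assumes "finite {x. v x \<noteq> 0}"
  shows "Jcre n v = (\<lambda>(j, \<mu>). if n \<in># \<mu> then v (j, \<mu> - {#n#}) else 0)"
proof (rule ext, clarify)
  fix j \<mu>
  have "Jcre n v (j, \<mu>) = (\<Sum>x\<in>{x. v x \<noteq> 0}. v x * (if x = (j, \<mu> - {#n#}) then (if n \<in># \<mu> then 1 else 0) else 0))"
    unfolding Jcre_def lin_ext_def by (simp only: Jcre_term)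
  also have "\<dots> = v (j, \<mu> - {#n#}) * (if n \<in># \<mu> then 1 else 0)"
    by (rule sum_delta_supp) (use assms in auto)
  finally show "Jcre n v (j, \<mu>) = (if n \<in># \<mu> then v (j, \<mu> - {#n#}) else 0)" by simp
qed

lemma Jann_term: "(case x of (j, lam) \<Rightarrow> smul (of_nat (n * count lam n)) (basis (j, lam - {#n#}))) (j, \<mu>) =
   (if x = (j, \<mu> + {#n#}) then of_nat (n * (count \<mu> n + 1)) else (0::complex))"
proof (cases x)
  case (Pair j' lam)
  show ?thesis
  proof (cases "n \<in># lam")
    case True
    then have "lam - {#n#} = \<mu> \<longleftrightarrow> lam = \<mu> + {#n#}" by (auto simp: insert_DiffM)
    moreover have "lam = \<mu> + {#n#} \<Longrightarrow> count lam n = count \<mu> n + 1" by auto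
    ultimately show ?thesis using Pair by (auto simp: smul_def basis_def algebra_simps)
  next
    case False
    then show ?thesis using Pair by (auto simp: smul_def basis_def count_eq_zero_iff)
  qed
qed

lemma Jann_formula:
  assumes "finite {x. v x \<noteq> 0}"
  shows "Jann n v = (\<lambda>(j, \<mu>). of_nat (n * (count \<mu> n + 1)) * v (j, \<mu> + {#n#}))"
proof (rule ext, clarify)
  fix j \<mu>
  have "Jann n v (j, \<mu>) = (\<Sum>x\<in>{x. v x \<noteq> 0}. v x * (if x = (j, \<mu> + {#n#}) then of_nat (n * (count \<mu> n + 1)) else 0))"
    unfolding Jann_def lin_ext_def by (simp only: Jann_term)
  also have "\<dots> = v (j, \<mu> + {#n#}) * of_nat (n * (count \<mu> n + 1))"
    by (rule sum_delta_supp) (use assms in auto)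
  finally show "Jann n v (j, \<mu>) = of_nat (n * (count \<mu> n + 1)) * v (j, \<mu> + {#n#})" by simp
qed



lemma Jcre_fin:
  assumes "finite {x. v x \<noteq> 0}"
  shows "finite {x. Jcre n v x \<noteq> 0}"
proof -
  have "{x. Jcre n v x \<noteq> 0} \<subseteq> (\<lambda>(j,\<mu>). (j, \<mu> + {#n#})) ` {x. v x \<noteq> 0}"
  proof clarify
    fix j \<mu> assume "Jcre n v (j, \<mu>) \<noteq> 0"
    then have "n \<in># \<mu>" "v (j, \<mu> - {#n#}) \<noteq> 0" by (auto simp: Jcre_formula[OF assms] split: if_splits)
    then show "(j, \<mu>) \<in> (\<lambda>(j,\<mu>). (j, \<mu> + {#n#})) ` {x. v x \<noteq> 0}"
      by (intro image_eqI[of _ _ "(j, \<mu> - {#n#})"]) (auto simp: insert_DiffM)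
  qed
  then show ?thesis using assms finite_surj by blast
qed

lemma Jann_fin:
  assumes "finite {x. v x \<noteq> 0}"
  shows "finite {x. Jann n v x \<noteq> 0}"
proof -
  have "{x. Jann n v x \<noteq> 0} \<subseteq> (\<lambda>(j,\<mu>). (j, \<mu> - {#n#})) ` {x. v x \<noteq> 0}"
  proof clarify
    fix j \<mu> assume "Jann n v (j, \<mu>) \<noteq> 0"
    then have "v (j, \<mu> + {#n#}) \<noteq> 0" by (auto simp: Jann_formula[OF assms])
    then show "(j, \<mu>) \<in> (\<lambda>(j,\<mu>). (j, \<mu> - {#n#})) ` {x. v x \<noteq> 0}"
      by (intro image_eqI[of _ _ "(j, \<mu> + {#n#})"]) auto
  qed
  then show ?thesis using assms finite_surj by blast
qed

lemma Jcre_foldr: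
  assumes "finite {x. v x \<noteq> 0}"
  shows "foldr (\<lambda>n f. Jcre n \<circ> f) xs id v = (\<lambda>(j, \<mu>). if mset xs \<subseteq># \<mu> then v (j, \<mu> - mset xs) else 0)
     \<and> finite {x. foldr (\<lambda>n f. Jcre n \<circ> f) xs id v x \<noteq> 0}"
proof (induction xs)
  case Nil
  then show ?case using assms by auto
next
  case (Cons a xs)
  let ?w = "foldr (\<lambda>n f. Jcre n \<circ> f) xs id v"
  have eq: "foldr (\<lambda>n f. Jcre n \<circ> f) (a # xs) id v = Jcre a ?w" by simp
  have fw: "finite {x. ?w x \<noteq> 0}" using Cons.IH by (rule conjunct2)
  have weq: "?w = (\<lambda>(j, \<mu>). if mset xs \<subseteq># \<mu> then v (j, \<mu> - mset xs) else 0)"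
    using Cons.IH by (rule conjunct1)
  show ?case unfolding eq
  proof
    show "Jcre a ?w = (\<lambda>(j, \<mu>). if mset (a # xs) \<subseteq># \<mu> then v (j, \<mu> - mset (a # xs)) else 0)"
      unfolding Jcre_formula[OF fw]
    proof (rule ext, clarify)
      fix j \<mu>
      show "(if a \<in># \<mu> then ?w (j, \<mu> - {#a#}) else 0) = (if mset (a # xs) \<subseteq># \<mu> then v (j, \<mu> - mset (a # xs)) else 0)"
        unfolding weq by (simp add: insert_subset_eq_iff)
    qed
    show "finite {x. Jcre a ?w x \<noteq> 0}" using fw by (rule Jcre_fin)
  qed
qed

lemma Jcre_prod_formula:
  assumes "finite {x. v x \<noteq> 0}"
  shows "Jcre_prod \<rho> v = (\<lambda>(j, \<mu>). if \<rho> \<subseteq># \<mu> then v (j, \<mu> - \<rho>) else 0)"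
  using Jcre_foldr[OF assms, of "sorted_list_of_multiset \<rho>"] unfolding Jcre_prod_def
  by (simp only: mset_sorted_list_of_multiset)

definition goodv :: "nat \<Rightarrow> int \<Rightarrow> vec \<Rightarrow> bool" where
  "goodv D j v \<longleftrightarrow> finite {x. v x \<noteq> 0} \<and> (\<forall>j' \<mu>. v (j', \<mu>) \<noteq> 0 \<longrightarrow> j' = j \<and> sum_mset \<mu> = D)"

lemma goodv_Jann:
  assumes "goodv D j v" shows "goodv (D - n) j (Jann n v)"
  using assms Jann_fin[of v n] Jann_formula[of v n] unfolding goodv_def
  by (auto, fastforce+)

lemma goodv_Jann_foldr:
  assumes "goodv D j v" shows "goodv (D - sum_list xs) j (foldr (\<lambda>n f. Jann n \<circ> f) xs id v)"
proof (induction xs)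
  case Nil then show ?case using assms by simp
next
  case (Cons a xs)
  then show ?case using goodv_Jann[OF Cons.IH, of a] by (simp add: diff_diff_left add.commute)
qed

lemma goodv_Jann_prod:
  assumes "goodv D j v" shows "goodv (D - sum_mset \<rho>) j (Jann_prod \<rho> v)"
proof -
  have "sum_list (sorted_list_of_multiset \<rho>) = sum_mset \<rho>"
    by (metis mset_sorted_list_of_multiset sum_mset_sum_list)
  then show ?thesis using goodv_Jann_foldr[OF assms, of "sorted_list_of_multiset \<rho>"]
    unfolding Jann_prod_def by simp
qed

lemma size_le_sum_mset: "0 \<notin># (\<rho>::nat multiset) \<Longrightarrow> size \<rho> \<le> sum_mset \<rho>"
proof (induction \<rho>)
  case (add x \<rho>)
  then have "x \<ge> 1" "size \<rho> \<le> sum_mset \<rho>" by auto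
  then show ?case by simp
qed simp

lemma elem_le_sum_mset: "x \<in># (\<rho>::nat multiset) \<Longrightarrow> x \<le> sum_mset \<rho>"
  by (metis le_add1 multi_member_split sum_mset.add_mset)

lemma finite_partitions: "finite (partitions q)"
proof -
  have "partitions q \<subseteq> (\<Union>m\<in>{..q}. multisets_of_size {..q} m)"
    unfolding partitions_def multisets_of_size_def
    using size_le_sum_mset elem_le_sum_mset by fastforce
  moreover have "finite (\<Union>m\<in>{..q}. multisets_of_size {..q} m)" by auto
  ultimately show ?thesis by (rule finite_subset)
qed

lemma goodv_Eplus:
  assumes "goodv D j v" shows "goodv (D - q) j (Eplus \<alpha> q v)"
proof -
  have g: "\<rho> \<in> partitions q \<Longrightarrow> goodv (D - q) j (Jann_prod \<rho> v)" for \<rho>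
    using goodv_Jann_prod[OF assms, of \<rho>] by (simp add: partitions_def)
  have "{x. Eplus \<alpha> q v x \<noteq> 0} \<subseteq> (\<Union>\<rho>\<in>partitions q. {x. Jann_prod \<rho> v x \<noteq> 0})"
    unfolding Eplus_def by (auto dest: sum.not_neutral_contains_not_neutral)
  moreover have "finite (\<Union>\<rho>\<in>partitions q. {x. Jann_prod \<rho> v x \<noteq> 0})"
    using g finite_partitions unfolding goodv_def by blast
  ultimately have f: "finite {x. Eplus \<alpha> q v x \<noteq> 0}" by (rule finite_subset)
  have "j' = j \<and> sum_mset \<mu> = D - q" if "Eplus \<alpha> q v (j', \<mu>) \<noteq> 0" for j' \<mu>
  proof -
    from that have "(\<Sum>\<rho>\<in>partitions q. of_real (expcoef (\<lambda>n. - \<alpha> / real n) \<rho>) * Jann_prod \<rho> v (j', \<mu>)) \<noteq> 0"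
      unfolding Eplus_def by simp
    then obtain \<rho> where "\<rho> \<in> partitions q" "of_real (expcoef (\<lambda>n. - \<alpha> / real n) \<rho>) * Jann_prod \<rho> v (j', \<mu>) \<noteq> 0"
      by (rule sum.not_neutral_contains_not_neutral)
    then have "\<rho> \<in> partitions q" "Jann_prod \<rho> v (j', \<mu>) \<noteq> 0" by auto
    then show ?thesis using g unfolding goodv_def by blast
  qed
  then show ?thesis using f unfolding goodv_def by blast
qed

lemma Eminus_formula:
  assumes "finite {x. v x \<noteq> 0}"
  shows "Eminus \<alpha> p v = (\<lambda>(j, \<mu>). \<Sum>\<rho>\<in>partitions p.
      of_real (expcoef (\<lambda>n. \<alpha> / real n) \<rho>) * (if \<rho> \<subseteq># \<mu> then v (j, \<mu> - \<rho>) else 0))"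
  unfolding Eminus_def Jcre_prod_formula[OF assms] by auto

lemma Eminus_nz:
  assumes "goodv D j v" "Eminus \<alpha> p v (j', \<mu>) \<noteq> 0"
  shows "j' = j \<and> sum_mset \<mu> = D + p"
proof -
  have fin: "finite {x. v x \<noteq> 0}" using assms(1) unfolding goodv_def by blast
  have "(\<Sum>\<rho>\<in>partitions p. of_real (expcoef (\<lambda>n. \<alpha> / real n) \<rho>) * (if \<rho> \<subseteq># \<mu> then v (j', \<mu> - \<rho>) else 0)) \<noteq> 0"
    using assms(2) unfolding Eminus_formula[OF fin] by simp
  then obtain \<rho> where "\<rho> \<in> partitions p" "of_real (expcoef (\<lambda>n. \<alpha> / real n) \<rho>) * (if \<rho> \<subseteq># \<mu> then v (j', \<mu> - \<rho>) else 0) \<noteq> 0"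
    by (rule sum.not_neutral_contains_not_neutral)
  then have r: "\<rho> \<in> partitions p" "\<rho> \<subseteq># \<mu>" "v (j', \<mu> - \<rho>) \<noteq> 0"
    by (auto split: if_splits)
  then have "j' = j" "sum_mset (\<mu> - \<rho>) = D" using assms(1) unfolding goodv_def by auto
  moreover have "sum_mset \<mu> = sum_mset (\<mu> - \<rho>) + sum_mset \<rho>"
    using r(2) by (metis subset_mset.diff_add sum_mset.union)
  ultimately show ?thesis using r(1) by (simp add: partitions_def)
qed



definition cc :: "real \<Rightarrow> nat multiset \<Rightarrow> real" where
  "cc \<alpha> \<rho> = expcoef (\<lambda>n. \<alpha> / real n) \<rho>"

definition Mf :: "real \<Rightarrow> nat multiset \<Rightarrow> nat \<Rightarrow> real" where
  "Mf \<alpha> \<nu> p = (\<Sum>\<rho>\<in>partitions p. (cc \<alpha> \<rho>)\<^sup>2 * weight (\<nu> + \<rho>))"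

lemma expcoef_superset:
  assumes "finite S" "set_mset \<rho> \<subseteq> S"
  shows "expcoef a \<rho> = (\<Prod>n\<in>S. a n ^ count \<rho> n / fact (count \<rho> n))"
  unfolding expcoef_def
  by (rule prod.mono_neutral_left) (use assms in \<open>auto simp: not_in_iff\<close>)

lemma weight_superset:
  assumes "finite S" "set_mset \<rho> \<subseteq> S"
  shows "weight \<rho> = (\<Prod>n\<in>S. real n ^ count \<rho> n * fact (count \<rho> n))"
  unfolding weight_def
  by (rule prod.mono_neutral_left) (use assms in \<open>auto simp: not_in_iff\<close>)

lemma prod_insert_remove_count:
  fixes g :: "nat \<Rightarrow> nat \<Rightarrow> real"
  assumes "finite S" "n \<in> S"
  shows "(\<Prod>m\<in>S. g m (count (\<rho> + {#n#}) m)) = g n (count \<rho> n + 1) * (\<Prod>m\<in>S - {n}. g m (count \<rho> m))"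
    and "(\<Prod>m\<in>S. g m (count \<rho> m)) = g n (count \<rho> n) * (\<Prod>m\<in>S - {n}. g m (count \<rho> m))"
proof -
  have "(\<Prod>m\<in>S. g m (count (\<rho> + {#n#}) m)) = g n (count (\<rho> + {#n#}) n) * (\<Prod>m\<in>S - {n}. g m (count (\<rho> + {#n#}) m))"
    by (rule prod.remove[OF assms])
  also have "(\<Prod>m\<in>S - {n}. g m (count (\<rho> + {#n#}) m)) = (\<Prod>m\<in>S - {n}. g m (count \<rho> m))"
    by (rule prod.cong) auto
  finally show "(\<Prod>m\<in>S. g m (count (\<rho> + {#n#}) m)) = g n (count \<rho> n + 1) * (\<Prod>m\<in>S - {n}. g m (count \<rho> m))"
    by simp
  show "(\<Prod>m\<in>S. g m (count \<rho> m)) = g n (count \<rho> n) * (\<Prod>m\<in>S - {n}. g m (count \<rho> m))"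
    by (rule prod.remove[OF assms])
qed

lemma expcoef_add:
  "expcoef a (\<rho> + {#n#}) = expcoef a \<rho> * a n / (real (count \<rho> n) + 1)"
proof -
  let ?S = "insert n (set_mset \<rho>)"
  let ?g = "\<lambda>m c. a m ^ c / fact c"
  have f: "finite ?S" "n \<in> ?S" by auto
  have A: "expcoef a (\<rho> + {#n#}) = (\<Prod>m\<in>?S. ?g m (count (\<rho> + {#n#}) m))"
    by (rule expcoef_superset) auto
  have B: "expcoef a \<rho> = (\<Prod>m\<in>?S. ?g m (count \<rho> m))"
    by (rule expcoef_superset) auto
  have C: "?g n (count \<rho> n + 1) = ?g n (count \<rho> n) * (a n / (real (count \<rho> n) + 1))"
    by (simp add: field_simps)
  show ?thesis unfolding A B prod_insert_remove_count[OF f, of ?g] C by simp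
qed

lemma weight_add:
  "weight (\<rho> + {#n#}) = weight \<rho> * real n * (real (count \<rho> n) + 1)"
proof -
  let ?S = "insert n (set_mset \<rho>)"
  let ?g = "\<lambda>m c. real m ^ c * fact c"
  have f: "finite ?S" "n \<in> ?S" by auto
  have A: "weight (\<rho> + {#n#}) = (\<Prod>m\<in>?S. ?g m (count (\<rho> + {#n#}) m))"
    by (rule weight_superset) auto
  have B: "weight \<rho> = (\<Prod>m\<in>?S. ?g m (count \<rho> m))"
    by (rule weight_superset) auto
  have C: "?g n (count \<rho> n + 1) = ?g n (count \<rho> n) * (real n * (real (count \<rho> n) + 1))"
    by (simp add: field_simps)
  show ?thesis unfolding A B prod_insert_remove_count[OF f, of ?g] C by simp
qed

lemma weight_nonneg: "weight \<rho> \<ge> 0"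
  unfolding weight_def by (intro prod_nonneg) auto

lemma Mf_nonneg: "Mf \<alpha> \<nu> p \<ge> 0"
  unfolding Mf_def by (intro sum_nonneg mult_nonneg_nonneg weight_nonneg) auto

lemma partitions_with_n:
  assumes "n > 0" "n \<le> p"
  shows "{\<rho>\<in>partitions p. n \<in># \<rho>} = (\<lambda>\<rho>. \<rho> + {#n#}) ` partitions (p - n)"
proof (rule set_eqI, rule iffI)
  fix \<rho> assume "\<rho> \<in> {\<rho>\<in>partitions p. n \<in># \<rho>}"
  then have r: "0 \<notin># \<rho>" "sum_mset \<rho> = p" "n \<in># \<rho>" by (auto simp: partitions_def)
  then have "\<rho> = (\<rho> - {#n#}) + {#n#}" by simp
  moreover have "\<rho> - {#n#} \<in> partitions (p - n)"
    using r by (auto simp: partitions_def dest: in_diffD) (metis add_diff_cancel_left' insert_DiffM sum_mset.add_mset)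
  ultimately show "\<rho> \<in> (\<lambda>\<rho>. \<rho> + {#n#}) ` partitions (p - n)" by blast
next
  fix \<rho> assume "\<rho> \<in> (\<lambda>\<rho>. \<rho> + {#n#}) ` partitions (p - n)"
  then show "\<rho> \<in> {\<rho>\<in>partitions p. n \<in># \<rho>}" using assms by (auto simp: partitions_def)
qed

lemma alg: "n \<noteq> 0 \<Longrightarrow> k \<noteq> 0 \<Longrightarrow> (c * (\<alpha> / n) / k)\<^sup>2 * (w * n * (a + k)) * (n * k)
   = \<alpha>\<^sup>2 * c\<^sup>2 * w * ((a + k) / k)" for n k c w a \<alpha> :: real
  by (simp add: field_simps power2_eq_square)

lemma key_sum:
  assumes "n > 0"
  shows "(\<Sum>\<rho>\<in>partitions p. (cc \<alpha> \<rho>)\<^sup>2 * weight (\<nu> + \<rho>) * (real n * real (count \<rho> n))) =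
    (if n \<le> p then (\<Sum>\<rho>\<in>partitions (p - n). \<alpha>\<^sup>2 * (cc \<alpha> \<rho>)\<^sup>2 * weight (\<nu> + \<rho>) *
        ((real (count \<nu> n) + real (count \<rho> n) + 1) / (real (count \<rho> n) + 1))) else 0)"
proof -
  let ?f = "\<lambda>\<rho>. (cc \<alpha> \<rho>)\<^sup>2 * weight (\<nu> + \<rho>) * (real n * real (count \<rho> n))"
  have "(\<Sum>\<rho>\<in>partitions p. ?f \<rho>) = (\<Sum>\<rho>\<in>{\<rho>\<in>partitions p. n \<in># \<rho>}. ?f \<rho>)"
    by (rule sum.mono_neutral_right) (auto simp: finite_partitions count_eq_zero_iff)
  also have "\<dots> = (if n \<le> p then (\<Sum>\<rho>\<in>partitions (p - n). \<alpha>\<^sup>2 * (cc \<alpha> \<rho>)\<^sup>2 * weight (\<nu> + \<rho>) *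
        ((real (count \<nu> n) + real (count \<rho> n) + 1) / (real (count \<rho> n) + 1))) else 0)"
  proof (cases "n \<le> p")
    case False
    then have "{\<rho>\<in>partitions p. n \<in># \<rho>} = {}"
      by (auto simp: partitions_def dest: elem_le_sum_mset)
    then show ?thesis using False by (simp only: sum.empty) simp
  next
    case True
    have inj: "inj_on (\<lambda>\<rho>. \<rho> + {#n#}) (partitions (p - n))" by (auto intro: inj_onI)
    have "(\<Sum>\<rho>\<in>{\<rho>\<in>partitions p. n \<in># \<rho>}. ?f \<rho>) = (\<Sum>\<rho>\<in>partitions (p - n). ?f (\<rho> + {#n#}))"
      unfolding partitions_with_n[OF assms True] by (rule sum.reindex[OF inj, unfolded comp_def])
    also have "\<dots> = (\<Sum>\<rho>\<in>partitions (p - n). \<alpha>\<^sup>2 * (cc \<alpha> \<rho>)\<^sup>2 * weight (\<nu> + \<rho>) *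
        ((real (count \<nu> n) + real (count \<rho> n) + 1) / (real (count \<rho> n) + 1)))"
    proof (rule sum.cong, simp)
      fix \<rho>
      have c: "cc \<alpha> (\<rho> + {#n#}) = cc \<alpha> \<rho> * (\<alpha> / real n) / (real (count \<rho> n) + 1)"
        unfolding cc_def by (rule expcoef_add)
      have w: "weight (\<nu> + (\<rho> + {#n#})) = weight (\<nu> + \<rho>) * real n * (real (count \<nu> n) + real (count \<rho> n) + 1)"
        using weight_add[of "\<nu> + \<rho>" n] by (simp add: add.assoc)
      show "?f (\<rho> + {#n#}) = \<alpha>\<^sup>2 * (cc \<alpha> \<rho>)\<^sup>2 * weight (\<nu> + \<rho>) *
        ((real (count \<nu> n) + real (count \<rho> n) + 1) / (real (count \<rho> n) + 1))"
      proof -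
        have k: "real (count \<rho> n) + 1 \<noteq> 0" by (simp add: add_nonneg_eq_0_iff)
        have e: "real (count (\<rho> + {#n#}) n) = real (count \<rho> n) + 1" by simp
        show ?thesis unfolding c w e
          using alg[OF _ k, where n="real n" and c="cc \<alpha> \<rho>" and w="weight (\<nu> + \<rho>)" and a="real (count \<nu> n)" and \<alpha>=\<alpha>] assms
          by (simp add: add.assoc mult.assoc)
      qed
    qed
    finally show ?thesis using True by simp
  qed
  finally show ?thesis .
qed

lemma sum_mset_count:
  assumes "finite S" "set_mset \<rho> \<subseteq> S"
  shows "sum_mset \<rho> = (\<Sum>n\<in>S. n * count \<rho> n)"
  using assms(2)
proof (induction \<rho>)
  case empty then show ?case by simp
next
  case (add x \<rho>)
  then have "x \<in> S" by auto
  have "(\<Sum>n\<in>S. n * count (add_mset x \<rho>) n) = (\<Sum>n\<in>S. n * count \<rho> n + (if n = x then x else 0))"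
    by (rule sum.cong) auto
  also have "\<dots> = (\<Sum>n\<in>S. n * count \<rho> n) + x"
    using \<open>x \<in> S\<close> assms(1) by (simp add: sum.distrib)
  finally show ?case using add by simp
qed

lemma recB: "real p * Mf \<alpha> {#} p = \<alpha>\<^sup>2 * (\<Sum>n\<in>{1..p}. Mf \<alpha> {#} (p - n))"
proof -
  have sp: "real p = (\<Sum>n\<in>{1..p}. real n * real (count \<rho> n))" if "\<rho> \<in> partitions p" for \<rho>
  proof -
    have "x \<in># \<rho> \<Longrightarrow> 1 \<le> x \<and> x \<le> p" for x
      using that elem_le_sum_mset[of x \<rho>] by (cases x) (auto simp: partitions_def)
    then have "set_mset \<rho> \<subseteq> {1..p}" by auto
    then have "sum_mset \<rho> = (\<Sum>n\<in>{1..p}. n * count \<rho> n)" by (intro sum_mset_count) auto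
    then show ?thesis using that by (simp add: partitions_def flip: of_nat_mult of_nat_sum)
  qed
  have "real p * Mf \<alpha> {#} p = (\<Sum>\<rho>\<in>partitions p. (cc \<alpha> \<rho>)\<^sup>2 * weight ({#} + \<rho>) * real p)"
    unfolding Mf_def by (simp add: sum_distrib_left mult.commute)
  also have "\<dots> = (\<Sum>\<rho>\<in>partitions p. \<Sum>n\<in>{1..p}. (cc \<alpha> \<rho>)\<^sup>2 * weight ({#} + \<rho>) * (real n * real (count \<rho> n)))"
    by (rule sum.cong) (auto simp: sp sum_distrib_left)
  also have "\<dots> = (\<Sum>n\<in>{1..p}. \<Sum>\<rho>\<in>partitions p. (cc \<alpha> \<rho>)\<^sup>2 * weight ({#} + \<rho>) * (real n * real (count \<rho> n)))"
    by (rule sum.swap)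
  also have "\<dots> = (\<Sum>n\<in>{1..p}. \<alpha>\<^sup>2 * Mf \<alpha> {#} (p - n))"
  proof (rule sum.cong, simp)
    fix n assume n: "n \<in> {1..p}"
    then show "(\<Sum>\<rho>\<in>partitions p. (cc \<alpha> \<rho>)\<^sup>2 * weight ({#} + \<rho>) * (real n * real (count \<rho> n))) = \<alpha>\<^sup>2 * Mf \<alpha> {#} (p - n)"
      by (subst key_sum) (auto simp: Mf_def sum_distrib_left mult.assoc)
  qed
  finally show ?thesis by (simp add: sum_distrib_left)
qed

lemma recA:
  assumes "n > 0"
  shows "Mf \<alpha> (\<nu> + {#n#}) p \<le> real n * (real (count \<nu> n) + 1) * Mf \<alpha> \<nu> p
     + \<alpha>\<^sup>2 * (real (count \<nu> n) + 1) * Mf \<alpha> \<nu> (p - n)"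
proof -
  let ?a = "real (count \<nu> n)"
  have "Mf \<alpha> (\<nu> + {#n#}) p = (\<Sum>\<rho>\<in>partitions p. (cc \<alpha> \<rho>)\<^sup>2 * weight (\<nu> + \<rho>) * (real n * (?a + 1))
       + (cc \<alpha> \<rho>)\<^sup>2 * weight (\<nu> + \<rho>) * (real n * real (count \<rho> n)))"
    unfolding Mf_def
  proof (rule sum.cong, simp)
    fix \<rho>
    have "weight (\<nu> + {#n#} + \<rho>) = weight (\<nu> + \<rho> + {#n#})" by (simp add: ac_simps)
    also have "\<dots> = weight (\<nu> + \<rho>) * real n * (?a + real (count \<rho> n) + 1)"
      using weight_add[of "\<nu> + \<rho>" n] by simp
    finally show "(cc \<alpha> \<rho>)\<^sup>2 * weight (\<nu> + {#n#} + \<rho>) = (cc \<alpha> \<rho>)\<^sup>2 * weight (\<nu> + \<rho>) * (real n * (?a + 1))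
       + (cc \<alpha> \<rho>)\<^sup>2 * weight (\<nu> + \<rho>) * (real n * real (count \<rho> n))"
      by (simp add: algebra_simps)
  qed
  also have "\<dots> = real n * (?a + 1) * Mf \<alpha> \<nu> p + (\<Sum>\<rho>\<in>partitions p. (cc \<alpha> \<rho>)\<^sup>2 * weight (\<nu> + \<rho>) * (real n * real (count \<rho> n)))"
    unfolding Mf_def by (simp add: sum.distrib sum_distrib_left algebra_simps)
  also have "(\<Sum>\<rho>\<in>partitions p. (cc \<alpha> \<rho>)\<^sup>2 * weight (\<nu> + \<rho>) * (real n * real (count \<rho> n)))
     \<le> \<alpha>\<^sup>2 * (?a + 1) * Mf \<alpha> \<nu> (p - n)"
  proof (cases "n \<le> p")
    case True
    have "(\<Sum>\<rho>\<in>partitions (p - n). \<alpha>\<^sup>2 * (cc \<alpha> \<rho>)\<^sup>2 * weight (\<nu> + \<rho>) *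
        ((?a + real (count \<rho> n) + 1) / (real (count \<rho> n) + 1)))
       \<le> (\<Sum>\<rho>\<in>partitions (p - n). \<alpha>\<^sup>2 * (?a + 1) * ((cc \<alpha> \<rho>)\<^sup>2 * weight (\<nu> + \<rho>)))"
    proof (rule sum_mono)
      fix \<rho>
      have q: "(?a + real (count \<rho> n) + 1) / (real (count \<rho> n) + 1) \<le> ?a + 1"
        by (simp add: divide_le_eq algebra_simps)
      have "0 \<le> \<alpha>\<^sup>2 * (cc \<alpha> \<rho>)\<^sup>2 * weight (\<nu> + \<rho>)" by (simp add: weight_nonneg)
      then have "\<alpha>\<^sup>2 * (cc \<alpha> \<rho>)\<^sup>2 * weight (\<nu> + \<rho>) * ((?a + real (count \<rho> n) + 1) / (real (count \<rho> n) + 1))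
          \<le> \<alpha>\<^sup>2 * (cc \<alpha> \<rho>)\<^sup>2 * weight (\<nu> + \<rho>) * (?a + 1)"
        by (rule mult_left_mono[OF q])
      then show "\<alpha>\<^sup>2 * (cc \<alpha> \<rho>)\<^sup>2 * weight (\<nu> + \<rho>) * ((?a + real (count \<rho> n) + 1) / (real (count \<rho> n) + 1))
         \<le> \<alpha>\<^sup>2 * (?a + 1) * ((cc \<alpha> \<rho>)\<^sup>2 * weight (\<nu> + \<rho>))" by (simp add: ac_simps)
    qed
    then show ?thesis using True by (simp add: key_sum[OF assms] Mf_def sum_distrib_left)
  next
    case False
    then show ?thesis by (simp add: key_sum[OF assms] Mf_nonneg)
  qed
  finally show ?thesis by simp
qed



definition sqs :: "(nat \<Rightarrow> real) \<Rightarrow> bool" where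
  "sqs f \<longleftrightarrow> summable (\<lambda>n. (f n)\<^sup>2)"

lemma sqs_mono:
  assumes "sqs g" "\<And>n. 0 \<le> f n" "\<And>n. f n \<le> g n"
  shows "sqs f"
  unfolding sqs_def
proof (rule summable_comparison_test[OF _ assms(1)[unfolded sqs_def]])
  show "\<exists>N. \<forall>n\<ge>N. norm ((f n)\<^sup>2) \<le> (g n)\<^sup>2"
    using assms(2,3) by (intro exI[of _ 0]) (auto intro!: power_mono)
qed

lemma sqs_add:
  assumes "sqs f" "sqs g"
  shows "sqs (\<lambda>n. f n + g n)"
  unfolding sqs_def
proof (rule summable_comparison_test)
  show "summable (\<lambda>n. 2 * (f n)\<^sup>2 + 2 * (g n)\<^sup>2)"
    using assms unfolding sqs_def by (intro summable_add summable_mult)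
  have "(x + y)\<^sup>2 \<le> 2 * x\<^sup>2 + 2 * y\<^sup>2" for x y :: real
  proof -
    have "0 \<le> (x - y)\<^sup>2" by simp
    moreover have "(x+y)\<^sup>2 = x\<^sup>2+y\<^sup>2+2*x*y" by (simp add: power2_sum)
    moreover have "(x-y)\<^sup>2 = x\<^sup>2+y\<^sup>2-2*x*y" by (simp add: power2_diff)
    ultimately show ?thesis by linarith
  qed
  then show "\<exists>N. \<forall>n\<ge>N. norm ((f n + g n)\<^sup>2) \<le> 2 * (f n)\<^sup>2 + 2 * (g n)\<^sup>2" by auto
qed

lemma sqs_cmult: "sqs f \<Longrightarrow> sqs (\<lambda>n. c * f n)"
  unfolding sqs_def by (simp add: power_mult_distrib summable_mult)

lemma sqs_shift: "sqs f \<Longrightarrow> sqs (\<lambda>p. f (p - n))"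
  unfolding sqs_def
proof -
  assume "summable (\<lambda>n. (f n)\<^sup>2)"
  then have "summable (\<lambda>p. (f (p + n - n))\<^sup>2)" by simp
  then show "summable (\<lambda>p. (f (p - n))\<^sup>2)"
    using summable_iff_shift[of "\<lambda>p. (f (p - n))\<^sup>2" n] by simp
qed

lemma sqs_shift_if: "sqs f \<Longrightarrow> sqs (\<lambda>p. if L \<le> p + q then f (p + q - L) else 0)"
proof -
  assume f: "sqs f"
  have "sqs (\<lambda>p. f (p + q - L))"
  proof (cases "q \<le> L")
    case True
    have "summable (\<lambda>p. (f (p + (L - q) + q - L))\<^sup>2)" using f True unfolding sqs_def by simp
    then show ?thesis unfolding sqs_def using summable_iff_shift[of "\<lambda>p. (f (p + q - L))\<^sup>2" "L - q"]
      by (simp add: add.assoc)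
  next
    case False
    then have e: "(\<lambda>p. (f (p + q - L))\<^sup>2) = (\<lambda>p. (f (p + (q - L)))\<^sup>2)" by (auto intro!: ext)
    show ?thesis using f unfolding sqs_def e
      using summable_iff_shift[of "\<lambda>p. (f p)\<^sup>2" "q - L"] by simp
  qed
  then show ?thesis unfolding sqs_def
    by (rule summable_comparison_test[rotated]) (intro exI[of _ 0], auto)
qed

lemma sqs_sum: "finite I \<Longrightarrow> (\<And>i. i \<in> I \<Longrightarrow> sqs (f i)) \<Longrightarrow> sqs (\<lambda>n. \<Sum>i\<in>I. f i n)"
proof (induction I rule: finite_induct)
  case empty then show ?case by (simp add: sqs_def)
next
  case (insert x F)
  then show ?case by (simp add: sqs_add)
qed

lemma partitions_0: "partitions 0 = {{#}}"
  unfolding partitions_def by (auto simp: sum_mset_0_iff) (metis multiset_nonemptyE)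

lemma Mf_empty_0: "Mf \<alpha> {#} 0 = 1"
  by (simp add: Mf_def partitions_0 cc_def expcoef_def weight_def)

lemma sum_rev_shift: fixes f :: "nat \<Rightarrow> 'a::comm_monoid_add" shows "(\<Sum>n\<in>{1..p}. f (p - n)) = (\<Sum>i<p. f i)"
proof -
  have "(\<Sum>n\<in>{1..p}. f (p - n)) = (\<Sum>k<p. f (p - Suc k))"
    using sum.atLeast1_atMost_eq[of "\<lambda>n. f (p - n)" p] by simp
  also have "\<dots> = (\<Sum>i<p. f i)" by (rule sum.nat_diff_reindex)
  finally show ?thesis .
qed

lemma Mf_empty_Suc: "Mf \<alpha> {#} (Suc p) = Mf \<alpha> {#} p * (real p + \<alpha>\<^sup>2) / (real p + 1)"
proof -
  have a: "real (Suc p) * Mf \<alpha> {#} (Suc p) = \<alpha>\<^sup>2 * (\<Sum>i<Suc p. Mf \<alpha> {#} i)"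
    using recB[of "Suc p" \<alpha>] sum_rev_shift[of "Mf \<alpha> {#}" "Suc p"] by simp
  have b: "real p * Mf \<alpha> {#} p = \<alpha>\<^sup>2 * (\<Sum>i<p. Mf \<alpha> {#} i)"
    using recB[of p \<alpha>] sum_rev_shift[of "Mf \<alpha> {#}" p] by simp
  have "real (Suc p) * Mf \<alpha> {#} (Suc p) = real p * Mf \<alpha> {#} p + \<alpha>\<^sup>2 * Mf \<alpha> {#} p"
    using a b by (simp add: algebra_simps)
  then show ?thesis by (simp add: field_simps)
qed

lemma Mf_empty_bound:
  assumes "\<alpha>\<^sup>2 \<le> 1"
  shows "Mf \<alpha> {#} p \<le> exp (- (1 - \<alpha>\<^sup>2) * harm p)"
proof (induction p)
  case 0 then show ?case by (simp add: Mf_empty_0 harm_def)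
next
  case (Suc p)
  let ?b = "1 - \<alpha>\<^sup>2"
  have fac: "(real p + \<alpha>\<^sup>2) / (real p + 1) = 1 + (- ?b / (real p + 1))"
    by (simp add: field_simps)
  have f0: "0 \<le> (real p + \<alpha>\<^sup>2) / (real p + 1)" by simp
  have f1: "(real p + \<alpha>\<^sup>2) / (real p + 1) \<le> exp (- ?b / (real p + 1))"
    unfolding fac by (rule exp_ge_add_one_self)
  have "Mf \<alpha> {#} (Suc p) = Mf \<alpha> {#} p * ((real p + \<alpha>\<^sup>2) / (real p + 1))"
    by (simp add: Mf_empty_Suc)
  also have "\<dots> \<le> exp (- ?b * harm p) * exp (- ?b / (real p + 1))"
    by (rule mult_mono[OF Suc.IH f1]) (simp_all add: f0)
  also have "\<dots> = exp (- ?b * harm (Suc p))"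
    by (simp add: harm_Suc exp_add[symmetric] field_simps)
  finally show ?case .
qed

lemma Mf_empty_powr:
  assumes "\<alpha>\<^sup>2 \<le> 1"
  shows "Mf \<alpha> {#} p \<le> (real p + 1) powr (- (1 - \<alpha>\<^sup>2))"
proof -
  have "Mf \<alpha> {#} p \<le> exp (- (1 - \<alpha>\<^sup>2) * harm p)" by (rule Mf_empty_bound[OF assms])
  also have "\<dots> \<le> exp (- (1 - \<alpha>\<^sup>2) * ln (real p + 1))"
    using assms ln_le_harm[of p] by (intro exp_le_cancel_iff[THEN iffD2] mult_left_mono_neg) auto
  also have "\<dots> = (real p + 1) powr (- (1 - \<alpha>\<^sup>2))"
    by (simp add: powr_def mult.commute)
  finally show ?thesis .
qed

lemma sqs_Mf_empty:
  assumes "\<alpha>\<^sup>2 < 1/2"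
  shows "sqs (Mf \<alpha> {#})"
proof -
  have s: "summable (\<lambda>p. real p powr (- 2 * (1 - \<alpha>\<^sup>2)))"
    using assms by (subst summable_real_powr_iff) simp
  have "summable (\<lambda>p. (real p + 1) powr (- 2 * (1 - \<alpha>\<^sup>2)))"
    using s summable_Suc_iff[of "\<lambda>p. real p powr (- 2 * (1 - \<alpha>\<^sup>2))"] by (simp add: add.commute)
  moreover have "((real p + 1) powr (- (1 - \<alpha>\<^sup>2)))\<^sup>2 = (real p + 1) powr (- 2 * (1 - \<alpha>\<^sup>2))" for p
    using powr_power[of "real p + 1" "- (1 - \<alpha>\<^sup>2)" 2] by simp
  ultimately have "sqs (\<lambda>p. (real p + 1) powr (- (1 - \<alpha>\<^sup>2)))"
    unfolding sqs_def by simp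
  then show ?thesis
  proof (rule sqs_mono)
    fix n show "0 \<le> Mf \<alpha> {#} n" by (rule Mf_nonneg)
    show "Mf \<alpha> {#} n \<le> (real n + 1) powr (- (1 - \<alpha>\<^sup>2))"
      by (rule Mf_empty_powr) (use assms in simp)
  qed
qed

lemma Mf_zero_elem: "Mf \<alpha> (add_mset 0 \<nu>) p = 0"
  unfolding Mf_def
proof (rule sum.neutral, rule ballI)
  fix \<rho>
  have "weight (add_mset 0 \<nu> + \<rho>) = weight ((\<nu> + \<rho>) + {#0#})" by simp
  also have "\<dots> = 0" by (simp only: weight_add)
  finally show "(cc \<alpha> \<rho>)\<^sup>2 * weight (add_mset 0 \<nu> + \<rho>) = 0" by simp
qed

lemma sqs_Mf:
  assumes "\<alpha>\<^sup>2 < 1/2"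
  shows "sqs (Mf \<alpha> \<nu>)"
proof (induction \<nu>)
  case empty then show ?case by (rule sqs_Mf_empty[OF assms])
next
  case (add n \<nu>)
  show ?case
  proof (cases "n = 0")
    case True
    then show ?thesis by (simp add: Mf_zero_elem sqs_def)
  next
    case False
    have "sqs (\<lambda>p. real n * (real (count \<nu> n) + 1) * Mf \<alpha> \<nu> p
     + \<alpha>\<^sup>2 * (real (count \<nu> n) + 1) * Mf \<alpha> \<nu> (p - n))"
      using add.IH by (intro sqs_add sqs_cmult sqs_shift)
    then show ?thesis
      by (rule sqs_mono) (use recA[of n \<alpha> \<nu>] False Mf_nonneg in auto)
  qed
qed



lemma norm_sum_sq:
  fixes z :: "'a \<Rightarrow> complex"
  assumes "finite I"
  shows "(cmod (\<Sum>i\<in>I. z i))\<^sup>2 \<le> real (card I) * (\<Sum>i\<in>I. (cmod (z i))\<^sup>2)"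
proof -
  have "(cmod (\<Sum>i\<in>I. z i))\<^sup>2 \<le> (\<Sum>i\<in>I. cmod (z i))\<^sup>2"
    by (intro power_mono norm_sum) auto
  also have "\<dots> \<le> (\<Sum>i\<in>I. (cmod (z i))\<^sup>2) * real (card I)"
    by (rule sum_squared_le_sum_of_squares)
  finally show ?thesis by (simp add: mult.commute)
qed

lemma basis_fin: "finite {y. basis x y \<noteq> 0}"
  by (simp add: basis_def)

lemma Em_basis:
  "Eminus \<alpha> p (basis (j', \<nu>)) (j, \<mu>) =
    (if j = j' \<and> \<nu> \<subseteq># \<mu> \<and> \<mu> - \<nu> \<in> partitions p then of_real (cc \<alpha> (\<mu> - \<nu>)) else 0)"
proof -
  have "Eminus \<alpha> p (basis (j', \<nu>)) (j, \<mu>) = (\<Sum>\<rho>\<in>partitions p.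
      of_real (expcoef (\<lambda>n. \<alpha> / real n) \<rho>) * (if \<rho> \<subseteq># \<mu> then basis (j', \<nu>) (j, \<mu> - \<rho>) else 0))"
    by (simp add: Eminus_formula[OF basis_fin])
  also have "\<dots> = (\<Sum>\<rho>\<in>partitions p. if \<rho> = \<mu> - \<nu> then
      (if j = j' \<and> \<nu> \<subseteq># \<mu> then of_real (cc \<alpha> \<rho>) else 0) else 0)"
  proof (rule sum.cong, simp)
    fix \<rho>
    have iff: "(\<rho> \<subseteq># \<mu> \<and> \<mu> - \<rho> = \<nu>) \<longleftrightarrow> (\<nu> \<subseteq># \<mu> \<and> \<rho> = \<mu> - \<nu>)"
    proof
      assume h: "\<rho> \<subseteq># \<mu> \<and> \<mu> - \<rho> = \<nu>"
      then have "\<mu> = \<nu> + \<rho>" by (metis subset_mset.diff_add add.commute)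
      then show "\<nu> \<subseteq># \<mu> \<and> \<rho> = \<mu> - \<nu>" by simp
    next
      assume h: "\<nu> \<subseteq># \<mu> \<and> \<rho> = \<mu> - \<nu>"
      then have "\<mu> = \<nu> + \<rho>" by (metis subset_mset.add_diff_inverse)
      then show "\<rho> \<subseteq># \<mu> \<and> \<mu> - \<rho> = \<nu>" by simp
    qed
    show "of_real (expcoef (\<lambda>n. \<alpha> / real n) \<rho>) * (if \<rho> \<subseteq># \<mu> then basis (j', \<nu>) (j, \<mu> - \<rho>) else 0) =
      (if \<rho> = \<mu> - \<nu> then (if j = j' \<and> \<nu> \<subseteq># \<mu> then of_real (cc \<alpha> \<rho>) else 0) else 0)"
      using iff by (auto simp: basis_def cc_def)
  qed
  also have "\<dots> = (if \<mu> - \<nu> \<in> partitions p then (if j = j' \<and> \<nu> \<subseteq># \<mu> then of_real (cc \<alpha> (\<mu> - \<nu>)) else 0) else 0)"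
    by (simp add: sum.delta' finite_partitions)
  finally show ?thesis by auto
qed

lemma Em_basis_bound:
  assumes "finite A"
  shows "(\<Sum>\<mu>\<in>A. weight \<mu> * (cmod (Eminus \<alpha> p (basis (j', \<nu>)) (j, \<mu>)))\<^sup>2) \<le> Mf \<alpha> \<nu> p"
proof -
  let ?A' = "{\<mu>\<in>A. j = j' \<and> \<nu> \<subseteq># \<mu> \<and> \<mu> - \<nu> \<in> partitions p}"
  have "(\<Sum>\<mu>\<in>A. weight \<mu> * (cmod (Eminus \<alpha> p (basis (j', \<nu>)) (j, \<mu>)))\<^sup>2)
      = (\<Sum>\<mu>\<in>A. if \<mu> \<in> ?A' then weight (\<nu> + (\<mu> - \<nu>)) * (cc \<alpha> (\<mu> - \<nu>))\<^sup>2 else 0)"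
    by (rule sum.cong) (auto simp: Em_basis)
  also have "\<dots> = (\<Sum>\<mu>\<in>?A'. weight (\<nu> + (\<mu> - \<nu>)) * (cc \<alpha> (\<mu> - \<nu>))\<^sup>2)"
    using assms by (simp add: sum.inter_filter[symmetric] Int_def)
  also have "\<dots> = (\<Sum>\<rho>\<in>(\<lambda>\<mu>. \<mu> - \<nu>) ` ?A'. weight (\<nu> + \<rho>) * (cc \<alpha> \<rho>)\<^sup>2)"
  proof (rule sum.reindex[symmetric, unfolded comp_def])
    show "inj_on (\<lambda>\<mu>. \<mu> - \<nu>) ?A'"
      by (rule inj_onI) (metis (no_types, lifting) mem_Collect_eq subset_mset.add_diff_inverse)
  qed
  also have "\<dots> \<le> (\<Sum>\<rho>\<in>partitions p. weight (\<nu> + \<rho>) * (cc \<alpha> \<rho>)\<^sup>2)"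
    by (rule sum_mono2) (auto simp: finite_partitions weight_nonneg)
  also have "\<dots> = Mf \<alpha> \<nu> p" by (simp add: Mf_def mult.commute)
  finally show ?thesis .
qed

lemma Em_linear:
  assumes "finite S" "\<And>u. u \<notin> S \<Longrightarrow> v u = 0"
  shows "Eminus \<alpha> p v y = (\<Sum>u\<in>S. v u * Eminus \<alpha> p (basis u) y)"
proof -
  have fv: "finite {x. v x \<noteq> 0}" using assms by (metis (mono_tags) finite_subset mem_Collect_eq subsetI)
  obtain j \<mu> where y: "y = (j, \<mu>)" by fastforce
  have bz: "basis u z = (if u = z then 1 else 0)" for u z by (auto simp: basis_def)
  have vz: "v z = (\<Sum>u\<in>S. v u * basis u z)" for z
    unfolding bz using sum_delta_supp[OF assms(1), of v z 1] assms(2) by simp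
  have "Eminus \<alpha> p v y = (\<Sum>\<rho>\<in>partitions p. of_real (expcoef (\<lambda>n. \<alpha> / real n) \<rho>) *
      (if \<rho> \<subseteq># \<mu> then (\<Sum>u\<in>S. v u * basis u (j, \<mu> - \<rho>)) else 0))"
    unfolding y Eminus_formula[OF fv] by (simp only: vz[symmetric] prod.case)
  also have "\<dots> = (\<Sum>\<rho>\<in>partitions p. \<Sum>u\<in>S. v u * (of_real (expcoef (\<lambda>n. \<alpha> / real n) \<rho>) *
      (if \<rho> \<subseteq># \<mu> then basis u (j, \<mu> - \<rho>) else 0)))"
    by (rule sum.cong) (auto simp: sum_distrib_left algebra_simps)
  also have "\<dots> = (\<Sum>u\<in>S. v u * Eminus \<alpha> p (basis u) y)"
    unfolding y Eminus_formula[OF basis_fin] by (subst sum.swap) (simp add: sum_distrib_left)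
  finally show ?thesis .
qed



definition pq :: "real \<Rightarrow> int \<Rightarrow> int \<Rightarrow> real \<Rightarrow> nat \<Rightarrow> real" where
  "pq \<alpha>0 k j t q = real q - t - (of_int k * \<alpha>0)\<^sup>2 / 2 - of_int k * \<alpha>0 * (of_int j * \<alpha>0)"

definition tau :: "real \<Rightarrow> int \<Rightarrow> int \<Rightarrow> nat multiset \<Rightarrow> nat \<Rightarrow> real" where
  "tau \<alpha>0 k j lam n = real (sum_mset lam) - real n - (of_int k * \<alpha>0)\<^sup>2 / 2 - of_int k * \<alpha>0 * (of_int j * \<alpha>0)"

lemma Y_unfold:
  "Ybasis \<alpha>0 k t (j, lam) (j', a) = (\<Sum>q\<in>{0..sum_mset lam}. if pq \<alpha>0 k j t q \<in> \<nat> then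
     Eminus (of_int k * \<alpha>0) (nat \<lfloor>pq \<alpha>0 k j t q\<rfloor>) (Eplus (of_int k * \<alpha>0) q (basis (j, lam))) (j' - k, a) else 0)"
  unfolding pq_def by (simp add: Ybasis_def cshift_def Let_def)

lemma goodv_basis: "goodv (sum_mset lam) j (basis (j, lam))"
  by (auto simp: goodv_def basis_def)

lemma Y_nz:
  assumes "Ybasis \<alpha>0 k t (j, lam) (j', a) \<noteq> 0"
  shows "j' = j + k \<and> t = tau \<alpha>0 k j lam (sum_mset a)"
proof -
  let ?\<alpha> = "of_int k * \<alpha>0"
  obtain q where q0: "q \<in> {0..sum_mset lam}" "(if pq \<alpha>0 k j t q \<in> \<nat> then
     Eminus ?\<alpha> (nat \<lfloor>pq \<alpha>0 k j t q\<rfloor>) (Eplus ?\<alpha> q (basis (j, lam))) (j' - k, a) else 0) \<noteq> 0"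
    using assms unfolding Y_unfold by (rule sum.not_neutral_contains_not_neutral)
  then have q: "q \<in> {0..sum_mset lam}" "pq \<alpha>0 k j t q \<in> \<nat>"
    "Eminus ?\<alpha> (nat \<lfloor>pq \<alpha>0 k j t q\<rfloor>) (Eplus ?\<alpha> q (basis (j, lam))) (j' - k, a) \<noteq> 0"
    by (auto split: if_splits)
  obtain m where m: "pq \<alpha>0 k j t q = real m" using q(2) by (auto elim: Nats_cases)
  have g: "goodv (sum_mset lam - q) j (Eplus ?\<alpha> q (basis (j, lam)))"
    by (rule goodv_Eplus[OF goodv_basis])
  from Eminus_nz[OF g q(3)] m have "j' - k = j" "sum_mset a = sum_mset lam - q + m" by simp_all
  moreover have "q \<le> sum_mset lam" using q(1) by simp
  ultimately show ?thesis using m unfolding pq_def tau_def by (simp add: of_nat_diff algebra_simps)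
qed

lemma numlem: "(real q + real n - real L \<in> \<nat> \<longleftrightarrow> L \<le> n + q) \<and>
   (L \<le> n + q \<longrightarrow> nat \<lfloor>real q + real n - real L\<rfloor> = n + q - L)"
proof (cases "L \<le> n + q")
  case True
  then have e: "real q + real n - real L = real (n + q - L)" by (simp add: of_nat_diff)
  show ?thesis unfolding e using True by (simp only: floor_of_nat nat_int of_nat_in_Nats simp_thms)
next
  case False
  then have "real q + real n - real L < 0" by simp
  then have "real q + real n - real L \<notin> \<nat>" by (auto elim: Nats_cases)
  then show ?thesis using False by simp
qed

lemma Y_val:
  "Ybasis \<alpha>0 k (tau \<alpha>0 k j lam n) (j, lam) (j', a) = (\<Sum>q\<in>{0..sum_mset lam}. if sum_mset lam \<le> n + q then
     Eminus (of_int k * \<alpha>0) (n + q - sum_mset lam) (Eplus (of_int k * \<alpha>0) q (basis (j, lam))) (j' - k, a) else 0)"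
  unfolding Y_unfold
proof (rule sum.cong, simp)
  fix q
  have e: "pq \<alpha>0 k j (tau \<alpha>0 k j lam n) q = real q + real n - real (sum_mset lam)"
    unfolding pq_def tau_def by simp
  show "(if pq \<alpha>0 k j (tau \<alpha>0 k j lam n) q \<in> \<nat> then Eminus (of_int k * \<alpha>0) (nat \<lfloor>pq \<alpha>0 k j (tau \<alpha>0 k j lam n) q\<rfloor>)
          (Eplus (of_int k * \<alpha>0) q (basis (j, lam))) (j' - k, a) else 0) =
        (if sum_mset lam \<le> n + q then Eminus (of_int k * \<alpha>0) (n + q - sum_mset lam)
          (Eplus (of_int k * \<alpha>0) q (basis (j, lam))) (j' - k, a) else 0)"
    unfolding e using numlem[where L="sum_mset lam" and n=n and q=q] by simp
qed

lemma Y_val':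
  "Ybasis \<alpha>0 k (tau \<alpha>0 k j lam n) (j, lam) (j + k, a) = (\<Sum>q\<in>{0..sum_mset lam}. if sum_mset lam \<le> n + q then
     Eminus (of_int k * \<alpha>0) (n + q - sum_mset lam) (Eplus (of_int k * \<alpha>0) q (basis (j, lam))) (j, a) else 0)"
proof -
  have e: "j + k - k = j" by simp
  show ?thesis using Y_val[of \<alpha>0 k j lam n "j + k" a] unfolding e .
qed

definition Fdeg :: "real \<Rightarrow> int \<Rightarrow> int \<Rightarrow> nat multiset \<Rightarrow> nat \<Rightarrow> real" where
  "Fdeg \<alpha>0 k j lam n = (\<Sum>a\<in>partitions n. weight a * (cmod (Ybasis \<alpha>0 k (tau \<alpha>0 k j lam n) (j, lam) (j + k, a)))\<^sup>2)"

lemma Fdeg_nonneg: "Fdeg \<alpha>0 k j lam n \<ge> 0"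
  unfolding Fdeg_def by (intro sum_nonneg mult_nonneg_nonneg weight_nonneg) auto

lemma sqs_Fdeg:
  assumes "(of_int k * \<alpha>0)\<^sup>2 < 1/2"
  shows "sqs (Fdeg \<alpha>0 k j lam)"
proof -
  define \<alpha> where "\<alpha> = of_int k * \<alpha>0"
  define L where "L = sum_mset lam"
  define Q where "Q = {0..L}"
  define v where "v q = Eplus \<alpha> q (basis (j, lam))" for q
  define S where "S q = {u. v q u \<noteq> 0}" for q
  have gv: "goodv (L - q) j (v q)" for q unfolding v_def L_def by (rule goodv_Eplus[OF goodv_basis])
  have fS: "finite (S q)" for q using gv[of q] unfolding goodv_def S_def by blast
  have vS: "u \<notin> S q \<Longrightarrow> v q u = 0" for u q unfolding S_def by simp
  define G where "G n = real (card Q) * (\<Sum>q\<in>Q. real (card (S q)) * (\<Sum>u\<in>S q. (cmod (v q u))\<^sup>2 *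
      (if L \<le> n + q then Mf \<alpha> (snd u) (n + q - L) else 0)))" for n
  have a2: "\<alpha>\<^sup>2 < 1/2" using assms by (simp add: \<alpha>_def)
  have sqsG: "sqs G" unfolding G_def
    by (intro sqs_cmult sqs_sum fS sqs_shift_if sqs_Mf[OF a2]) (auto simp: Q_def)
  have bound: "Fdeg \<alpha>0 k j lam n \<le> G n" for n
  proof -
    define z where "z q a = (if L \<le> n + q then Eminus \<alpha> (n + q - L) (v q) (j, a) else 0)" for q a
    have Yz: "Ybasis \<alpha>0 k (tau \<alpha>0 k j lam n) (j, lam) (j + k, a) = (\<Sum>q\<in>Q. z q a)" for a
      unfolding Y_val' z_def Q_def L_def v_def \<alpha>_def ..
    have "Fdeg \<alpha>0 k j lam n = (\<Sum>a\<in>partitions n. weight a * (cmod (\<Sum>q\<in>Q. z q a))\<^sup>2)"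
      unfolding Fdeg_def Yz ..
    also have "\<dots> \<le> (\<Sum>a\<in>partitions n. weight a * (real (card Q) * (\<Sum>q\<in>Q. (cmod (z q a))\<^sup>2)))"
      by (intro sum_mono mult_left_mono norm_sum_sq weight_nonneg) (auto simp: Q_def)
    also have "\<dots> = real (card Q) * (\<Sum>q\<in>Q. \<Sum>a\<in>partitions n. weight a * (cmod (z q a))\<^sup>2)"
      by (simp add: sum_distrib_left sum_distrib_right sum.swap[of _ Q] algebra_simps)
    also have "\<dots> \<le> G n"
      unfolding G_def
    proof (intro mult_left_mono sum_mono, simp_all)
      fix q
      show "(\<Sum>a\<in>partitions n. weight a * (cmod (z q a))\<^sup>2) \<le> real (card (S q)) * (\<Sum>u\<in>S q. (cmod (v q u))\<^sup>2 *
          (if L \<le> n + q then Mf \<alpha> (snd u) (n + q - L) else 0))"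
      proof (cases "L \<le> n + q")
        case False
        then show ?thesis by (simp add: z_def)
      next
        case True
        let ?p = "n + q - L"
        have "(\<Sum>a\<in>partitions n. weight a * (cmod (z q a))\<^sup>2)
            = (\<Sum>a\<in>partitions n. weight a * (cmod (\<Sum>u\<in>S q. v q u * Eminus \<alpha> ?p (basis u) (j, a)))\<^sup>2)"
          unfolding z_def using True by (simp add: Em_linear[OF fS vS])
        also have "\<dots> \<le> (\<Sum>a\<in>partitions n. weight a * (real (card (S q)) * (\<Sum>u\<in>S q. (cmod (v q u * Eminus \<alpha> ?p (basis u) (j, a)))\<^sup>2)))"
          by (intro sum_mono mult_left_mono norm_sum_sq weight_nonneg fS)
        also have "\<dots> = real (card (S q)) * (\<Sum>u\<in>S q. (cmod (v q u))\<^sup>2 *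
            (\<Sum>a\<in>partitions n. weight a * (cmod (Eminus \<alpha> ?p (basis (fst u, snd u)) (j, a)))\<^sup>2))"
          by (simp add: sum_distrib_left sum_distrib_right sum.swap[of _ "S q"] algebra_simps norm_mult power_mult_distrib)
        also have "\<dots> \<le> real (card (S q)) * (\<Sum>u\<in>S q. (cmod (v q u))\<^sup>2 * Mf \<alpha> (snd u) ?p)"
          by (intro mult_left_mono sum_mono Em_basis_bound finite_partitions) auto
        finally show ?thesis using True by simp
      qed
    qed
    finally show ?thesis .
  qed
  show ?thesis by (rule sqs_mono[OF sqsG Fdeg_nonneg bound])
qed



definition goodser :: "(real \<Rightarrow> tvec) \<Rightarrow> bool" where
  "goodser v \<longleftrightarrow> (\<forall>X. finite {t. v t X \<noteq> 0}) \<and>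
     (\<exists>g. (\<forall>X. (\<Sum>t\<in>{t. v t X \<noteq> 0}. cmod (v t X)) \<le> g X) \<and> (\<lambda>X. tweight X * (g X)\<^sup>2) summable_on UNIV)"

lemma tweight_nonneg: "tweight X \<ge> 0"
  unfolding tweight_def by (auto split: prod.splits intro!: mult_nonneg_nonneg weight_nonneg)

lemma infsum_finite_supp:
  fixes f :: "'a \<Rightarrow> 'b::{comm_monoid_add, t2_space}"
  assumes "finite T" "\<And>t. t \<notin> T \<Longrightarrow> f t = 0"
  shows "infsum f UNIV = sum f T"
proof -
  have "infsum f UNIV = infsum f T" by (rule infsum_cong_neutral) (use assms in auto)
  then show ?thesis using assms(1) by simp
qed

lemma summable_finite_supp:
  fixes f :: "'a \<Rightarrow> 'b::{comm_monoid_add, topological_space}"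
  assumes "finite {t. f t \<noteq> 0}"
  shows "f summable_on UNIV"
proof -
  have "f summable_on UNIV \<longleftrightarrow> f summable_on {t. f t \<noteq> 0}"
    by (rule summable_on_cong_neutral) auto
  then show ?thesis using assms by simp
qed

lemma tail_small:
  fixes h :: "'a \<Rightarrow> real"
  assumes "h summable_on UNIV" "e > 0"
  shows "\<exists>G. finite G \<and> infsum h (UNIV - G) < e"
proof -
  have "(sum h \<longlongrightarrow> infsum h UNIV) (finite_subsets_at_top UNIV)"
    using assms(1) by (simp add: has_sum_def[symmetric])
  then have "eventually (\<lambda>G. dist (sum h G) (infsum h UNIV) < e) (finite_subsets_at_top UNIV)"
    using assms(2) by (rule tendstoD)
  then obtain G where G: "finite G" "dist (sum h G) (infsum h UNIV) < e"
    unfolding eventually_finite_subsets_at_top by blast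
  have "infsum h (UNIV - G) = infsum h UNIV - infsum h G"
    by (rule infsum_Diff) (use assms(1) G(1) in auto)
  also have "\<dots> = infsum h UNIV - sum h G" using G(1) by simp
  finally show ?thesis using G by (auto simp: dist_real_def)
qed

lemma goodser_norm_conv:
  assumes "goodser v"
  shows "norm_conv v (\<lambda>X. infsum (\<lambda>t. v t X) UNIV)"
proof -
  define T where "T X = {t. v t X \<noteq> 0}" for X
  have fT: "finite (T X)" for X using assms unfolding goodser_def T_def by blast
  obtain g where gb: "\<And>X. (\<Sum>t\<in>T X. cmod (v t X)) \<le> g X"
    and hs: "(\<lambda>X. tweight X * (g X)\<^sup>2) summable_on UNIV"
    using assms unfolding goodser_def T_def by blast
  define h where "h X = tweight X * (g X)\<^sup>2" for X
  define L where "L X = infsum (\<lambda>t. v t X) UNIV" for X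
  have LT: "L X = (\<Sum>t\<in>T X. v t X)" for X
    unfolding L_def by (rule infsum_finite_supp[OF fT]) (auto simp: T_def)
  have g0: "0 \<le> g X" for X using gb[of X] sum_nonneg[of "T X" "\<lambda>t. cmod (v t X)"] by force
  have sq_le: "tweight X * (cmod z)\<^sup>2 \<le> h X" if "cmod z \<le> g X" for X z
    unfolding h_def by (intro mult_left_mono power_mono tweight_nonneg) (use that in auto)
  have Lg: "cmod (L X) \<le> g X" for X
    unfolding LT using norm_sum[of "\<lambda>t. v t X" "T X"] gb[of X] by linarith
  have in_L: "in_tspace L"
    unfolding in_tspace_def
  proof (rule summable_on_comparison_test[OF hs[folded h_def]])
    fix X
    show "tweight X * (cmod (L X))\<^sup>2 \<le> h X" by (rule sq_le[OF Lg])
    show "0 \<le> tweight X * (cmod (L X))\<^sup>2" by (simp add: tweight_nonneg)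
  qed
  have conv: "((\<lambda>F. tdist (\<lambda>x. \<Sum>t\<in>F. v t x) L) \<longlongrightarrow> 0) (finite_subsets_at_top UNIV)"
  proof (rule tendstoI)
    fix \<epsilon> :: real assume \<epsilon>: "\<epsilon> > 0"
    obtain G where G: "finite G" "infsum h (UNIV - G) < \<epsilon>\<^sup>2"
      using tail_small[OF hs[folded h_def], of "\<epsilon>\<^sup>2"] \<epsilon> by auto
    define T0 where "T0 = (\<Union>X\<in>G. T X)"
    have fT0: "finite T0" unfolding T0_def using G(1) fT by blast
    show "eventually (\<lambda>F. dist (tdist (\<lambda>x. \<Sum>t\<in>F. v t x) L) 0 < \<epsilon>) (finite_subsets_at_top UNIV)"
      unfolding eventually_finite_subsets_at_top
    proof (intro exI[of _ T0] conjI allI impI)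
      show "finite T0" by (rule fT0)
      show "T0 \<subseteq> UNIV" by simp
      fix F assume F: "finite F \<and> T0 \<subseteq> F \<and> F \<subseteq> UNIV"
      define e where "e X = (\<Sum>t\<in>F. v t X) - L X" for X
      have eT: "e X = - (\<Sum>t\<in>T X - F. v t X)" for X
      proof -
        have "(\<Sum>t\<in>F. v t X) = (\<Sum>t\<in>F \<inter> T X. v t X)"
          by (rule sum.mono_neutral_right) (use F in \<open>auto simp: T_def\<close>)
        moreover have "L X = (\<Sum>t\<in>T X \<inter> F. v t X) + (\<Sum>t\<in>T X - F. v t X)"
          unfolding LT by (rule sum.Int_Diff[OF fT])
        ultimately show ?thesis unfolding e_def by (simp add: Int_commute)
      qed
      have eG: "e X = 0" if "X \<in> G" for X
      proof -
        have "T X - F = {}" using that F unfolding T0_def by auto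
        then show ?thesis unfolding eT by (simp only: sum.empty) simp
      qed
      have eg: "cmod (e X) \<le> g X" for X
      proof -
        have "cmod (e X) \<le> (\<Sum>t\<in>T X - F. cmod (v t X))" unfolding eT norm_minus_cancel by (rule norm_sum)
        also have "\<dots> \<le> (\<Sum>t\<in>T X. cmod (v t X))" by (rule sum_mono2[OF fT]) auto
        finally show ?thesis using gb[of X] by linarith
      qed
      define k where "k X = tweight X * (cmod (e X))\<^sup>2" for X
      have k0: "0 \<le> k X" for X unfolding k_def by (simp add: tweight_nonneg)
      have kh: "k X \<le> h X" for X unfolding k_def by (rule sq_le[OF eg])
      have hsD: "h summable_on (UNIV - G)"
        using hs[folded h_def] by (rule summable_on_subset_banach) simp
      have ksD: "k summable_on (UNIV - G)"
        by (rule summable_on_comparison_test[OF hsD]) (auto intro: kh k0)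
      have "infsum k UNIV = infsum k (UNIV - G)"
        by (rule infsum_cong_neutral) (auto simp: k_def eG)
      also have "\<dots> \<le> infsum h (UNIV - G)"
        by (rule infsum_mono[OF ksD hsD kh])
      finally have kl: "infsum k UNIV < \<epsilon>\<^sup>2" using G(2) by linarith
      have "tdist (\<lambda>x. \<Sum>t\<in>F. v t x) L = sqrt (infsum k UNIV)"
        unfolding tdist_def k_def e_def by simp
      also have "\<dots> < sqrt (\<epsilon>\<^sup>2)" using kl by (simp only: real_sqrt_less_iff)
      also have "\<dots> = \<epsilon>" using \<epsilon> by simp
      finally have "tdist (\<lambda>x. \<Sum>t\<in>F. v t x) L < \<epsilon>" .
      moreover have "0 \<le> tdist (\<lambda>x. \<Sum>t\<in>F. v t x) L" unfolding tdist_def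
        by (intro real_sqrt_ge_zero infsum_nonneg mult_nonneg_nonneg tweight_nonneg) simp
      ultimately show "dist (tdist (\<lambda>x. \<Sum>t\<in>F. v t x) L) 0 < \<epsilon>" by simp
    qed
  qed
  show ?thesis unfolding norm_conv_def L_def[symmetric] using in_L conv by blast
qed

lemma goodser_add:
  assumes "goodser v" "goodser w"
  shows "goodser (\<lambda>t X. v t X + w t X)"
proof -
  define T where "T v X = {t. v t X \<noteq> 0}" for v :: "real \<Rightarrow> tvec" and X
  have fv: "finite (T v X)" and fw: "finite (T w X)" for X using assms unfolding goodser_def T_def by blast+
  obtain g1 where g1: "\<And>X. (\<Sum>t\<in>T v X. cmod (v t X)) \<le> g1 X" "(\<lambda>X. tweight X * (g1 X)\<^sup>2) summable_on UNIV"
    using assms(1) unfolding goodser_def T_def by blast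
  obtain g2 where g2: "\<And>X. (\<Sum>t\<in>T w X. cmod (w t X)) \<le> g2 X" "(\<lambda>X. tweight X * (g2 X)\<^sup>2) summable_on UNIV"
    using assms(2) unfolding goodser_def T_def by blast
  have sub: "T (\<lambda>t X. v t X + w t X) X \<subseteq> T v X \<union> T w X" for X unfolding T_def by auto
  have fin: "finite (T (\<lambda>t X. v t X + w t X) X)" for X using sub fv fw by (meson finite_UnI finite_subset)
  have bound: "(\<Sum>t\<in>T (\<lambda>t X. v t X + w t X) X. cmod (v t X + w t X)) \<le> g1 X + g2 X" for X
  proof -
    have "(\<Sum>t\<in>T (\<lambda>t X. v t X + w t X) X. cmod (v t X + w t X)) \<le> (\<Sum>t\<in>T v X \<union> T w X. cmod (v t X + w t X))"
      by (rule sum_mono2) (use sub fv fw in auto)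
    also have "\<dots> \<le> (\<Sum>t\<in>T v X \<union> T w X. cmod (v t X) + cmod (w t X))"
      by (rule sum_mono) (rule norm_triangle_ineq)
    also have "\<dots> = (\<Sum>t\<in>T v X \<union> T w X. cmod (v t X)) + (\<Sum>t\<in>T v X \<union> T w X. cmod (w t X))"
      by (rule sum.distrib)
    also have "(\<Sum>t\<in>T v X \<union> T w X. cmod (v t X)) = (\<Sum>t\<in>T v X. cmod (v t X))"
      by (rule sum.mono_neutral_right) (use fv fw in \<open>auto simp: T_def\<close>)
    also have "(\<Sum>t\<in>T v X \<union> T w X. cmod (w t X)) = (\<Sum>t\<in>T w X. cmod (w t X))"
      by (rule sum.mono_neutral_right) (use fv fw in \<open>auto simp: T_def\<close>)
    finally show ?thesis using g1(1)[of X] g2(1)[of X] by linarith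
  qed
  have "(\<lambda>X. 2 * (tweight X * (g1 X)\<^sup>2) + 2 * (tweight X * (g2 X)\<^sup>2)) summable_on UNIV"
    by (intro summable_on_add summable_on_cmult_right g1(2) g2(2))
  then have "(\<lambda>X. tweight X * (g1 X + g2 X)\<^sup>2) summable_on UNIV"
  proof (rule summable_on_comparison_test)
    fix X
    have sq: "(g1 X + g2 X)\<^sup>2 \<le> 2 * (g1 X)\<^sup>2 + 2 * (g2 X)\<^sup>2"
    proof -
      have "0 \<le> (g1 X - g2 X)\<^sup>2" by simp
      then show ?thesis by (simp add: power2_sum power2_diff)
    qed
    then show "tweight X * (g1 X + g2 X)\<^sup>2 \<le> 2 * (tweight X * (g1 X)\<^sup>2) + 2 * (tweight X * (g2 X)\<^sup>2)"
      using mult_left_mono[OF sq tweight_nonneg[of X]] by (simp add: algebra_simps)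
    show "0 \<le> tweight X * (g1 X + g2 X)\<^sup>2" by (simp add: tweight_nonneg)
  qed
  then show ?thesis unfolding goodser_def using fin bound unfolding T_def
    by (intro conjI allI exI[of _ "\<lambda>X. g1 X + g2 X"]) auto
qed



declare of_nat_sum_mset[simp del]

lemma Phi_expand:
  assumes "finite S" "{e. \<Psi> e \<noteq> 0} \<subseteq> S"
  shows "Phi_term \<alpha>0 k s \<Psi> t X = (\<Sum>e\<in>S. \<Psi> e * (Ybasis \<alpha>0 k t (fst e) (fst X) * Ybasis \<alpha>0 k (t - of_int s) (snd e) (snd X)))"
proof -
  have "Phi_term \<alpha>0 k s \<Psi> t X = (\<Sum>e\<in>{e. \<Psi> e \<noteq> 0}. \<Psi> e * (Ybasis \<alpha>0 k t (fst e) (fst X) * Ybasis \<alpha>0 k (t - of_int s) (snd e) (snd X)))"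
    unfolding Phi_term_def tensor_apply_def lin_ext_def[of _ \<Psi>] Ycoef_def lin_ext_basis
    by (simp add: case_prod_beta)
  also have "\<dots> = (\<Sum>e\<in>S. \<Psi> e * (Ybasis \<alpha>0 k t (fst e) (fst X) * Ybasis \<alpha>0 k (t - of_int s) (snd e) (snd X)))"
    by (rule sum.mono_neutral_left) (use assms in auto)
  finally show ?thesis .
qed

lemma weight_nz: "weight a \<noteq> 0 \<Longrightarrow> 0 \<notin># a"
  unfolding weight_def by (auto simp: count_eq_zero_iff)

context
  fixes \<alpha>0 :: real and k j s :: int and lam mu :: "nat multiset"
begin

definition "cE = int (sum_mset mu) - int (sum_mset lam) + s"

definition "degX (X::tidx) = sum_mset (snd (fst X))"

definition "hE X = tweight X * (cmod (Ybasis \<alpha>0 k (tau \<alpha>0 k j lam (degX X)) (j, lam) (fst X)) *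
    cmod (Ybasis \<alpha>0 k (tau \<alpha>0 k j lam (degX X) - of_int s) (j, mu) (snd X)))\<^sup>2"

definition "Gy n = (if nat (- cE) \<le> n + nat cE then Fdeg \<alpha>0 k j mu (n + nat cE - nat (- cE)) else 0)"

definition "Block n = (\<lambda>(a, b). ((j + k, a), (j + k, b))) `
   (partitions n \<times> (if 0 \<le> int n + cE then partitions (nat (int n + cE)) else {}))"

lemma hE_nonneg: "hE X \<ge> 0"
  unfolding hE_def by (simp add: tweight_nonneg)

lemma cE_iff: "(0 \<le> int n + cE) \<longleftrightarrow> (nat (- cE) \<le> n + nat cE)"
  by auto

lemma cE_nat: "0 \<le> int n + cE \<Longrightarrow> nat (int n + cE) = n + nat cE - nat (- cE)"
  by auto

lemma tau_shift:
  assumes "0 \<le> int n + cE"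
  shows "tau \<alpha>0 k j lam n - of_int s = tau \<alpha>0 k j mu (nat (int n + cE))"
proof -
  have "real (nat (int n + cE)) = real n + real (sum_mset mu) - real (sum_mset lam) + of_int s"
    using assms unfolding cE_def by (simp add: of_nat_nat)
  then show ?thesis unfolding tau_def by (simp add: algebra_simps)
qed

lemma hE_supp:
  assumes "hE X \<noteq> 0"
  shows "X \<in> Block (degX X)"
proof -
  obtain j1 a j2 b where X: "X = ((j1, a), (j2, b))" by (metis prod.collapse)
  from assms have tw: "tweight X \<noteq> 0"
    and y1: "Ybasis \<alpha>0 k (tau \<alpha>0 k j lam (degX X)) (j, lam) (j1, a) \<noteq> 0"
    and y2: "Ybasis \<alpha>0 k (tau \<alpha>0 k j lam (degX X) - of_int s) (j, mu) (j2, b) \<noteq> 0"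
    unfolding hE_def X by auto
  have a0: "0 \<notin># a" and b0: "0 \<notin># b" using tw weight_nz unfolding X tweight_def by auto
  have j1: "j1 = j + k" using Y_nz[OF y1] by simp
  have j2: "j2 = j + k" and tt: "tau \<alpha>0 k j lam (sum_mset a) - of_int s = tau \<alpha>0 k j mu (sum_mset b)"
    using Y_nz[OF y2] unfolding X degX_def by auto
  from tt have "real (sum_mset b) = real (sum_mset a) + real (sum_mset mu) - real (sum_mset lam) + of_int s"
    unfolding tau_def by (simp add: algebra_simps)
  then have "int (sum_mset b) = int (sum_mset a) + cE" unfolding cE_def by linarith
  then have c0: "0 \<le> int (sum_mset a) + cE" and bn: "sum_mset b = nat (int (sum_mset a) + cE)" by auto
  have "(a, b) \<in> partitions (sum_mset a) \<times> partitions (nat (int (sum_mset a) + cE))"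
    using a0 b0 bn by (simp add: partitions_def)
  then show ?thesis unfolding Block_def X degX_def using j1 j2 c0 by (auto intro!: image_eqI[of _ _ "(a,b)"])
qed

lemma Block_sum: "(\<Sum>X\<in>Block n. hE X) = Fdeg \<alpha>0 k j lam n * Gy n"
proof (cases "0 \<le> int n + cE")
  case False
  then show ?thesis unfolding Block_def Gy_def using cE_iff[of n] by simp
next
  case True
  define m where "m = nat (int n + cE)"
  have inj: "inj_on (\<lambda>(a, b). ((j + k, a), (j + k, b))) (partitions n \<times> partitions m)"
    by (auto intro: inj_onI)
  have Bn: "Block n = (\<lambda>(a, b). ((j + k, a), (j + k, b))) ` (partitions n \<times> partitions m)"
    using True by (simp add: Block_def m_def)
  have "(\<Sum>X\<in>Block n. hE X) = (\<Sum>(a, b)\<in>partitions n \<times> partitions m. hE ((j + k, a), (j + k, b)))"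
    unfolding Bn by (subst sum.reindex[OF inj]) (simp add: case_prod_beta comp_def)
  also have "\<dots> = (\<Sum>a\<in>partitions n. \<Sum>b\<in>partitions m.
      (weight a * (cmod (Ybasis \<alpha>0 k (tau \<alpha>0 k j lam n) (j, lam) (j + k, a)))\<^sup>2) *
      (weight b * (cmod (Ybasis \<alpha>0 k (tau \<alpha>0 k j mu m) (j, mu) (j + k, b)))\<^sup>2))"
    unfolding sum.cartesian_product[symmetric]
  proof (intro sum.cong refl)
    fix a b assume "a \<in> partitions n" "b \<in> partitions m"
    then have "degX ((j + k, a), (j + k, b)) = n" by (simp add: degX_def partitions_def)
    then show "hE ((j + k, a), (j + k, b)) = (weight a * (cmod (Ybasis \<alpha>0 k (tau \<alpha>0 k j lam n) (j, lam) (j + k, a)))\<^sup>2) *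
      (weight b * (cmod (Ybasis \<alpha>0 k (tau \<alpha>0 k j mu m) (j, mu) (j + k, b)))\<^sup>2)"
      using tau_shift[OF True] unfolding hE_def m_def by (simp add: tweight_def power_mult_distrib algebra_simps)
  qed
  also have "\<dots> = Fdeg \<alpha>0 k j lam n * Fdeg \<alpha>0 k j mu m"
    unfolding Fdeg_def by (simp add: sum_product)
  also have "Fdeg \<alpha>0 k j mu m = Gy n"
    unfolding Gy_def m_def using True cE_iff[of n] cE_nat[OF True] by simp
  finally show ?thesis .
qed

lemma Block_disj: "n \<noteq> n' \<Longrightarrow> Block n \<inter> Block n' = {}"
  unfolding Block_def partitions_def by auto

lemma Block_fin: "finite (Block n)"
  unfolding Block_def by (auto simp: finite_partitions)

lemma hE_summable:
  assumes "sqs (Fdeg \<alpha>0 k j lam)" "sqs (Fdeg \<alpha>0 k j mu)"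
  shows "hE summable_on UNIV"
proof -
  have sG: "sqs Gy" unfolding Gy_def
    using sqs_shift_if[OF assms(2), of "nat (- cE)" "nat cE"] by simp
  have G0: "0 \<le> Gy n" for n unfolding Gy_def by (simp add: Fdeg_nonneg)
  have sp: "summable (\<lambda>n. Fdeg \<alpha>0 k j lam n * Gy n)"
  proof (rule summable_comparison_test)
    show "summable (\<lambda>n. (Fdeg \<alpha>0 k j lam n)\<^sup>2 + (Gy n)\<^sup>2)"
      using assms(1) sG unfolding sqs_def by (rule summable_add)
    have "x * y \<le> x\<^sup>2 + y\<^sup>2" if "0 \<le> x" "0 \<le> y" for x y :: real
    proof -
      have "0 \<le> (x - y)\<^sup>2" by simp
      then have "2 * (x * y) \<le> x\<^sup>2 + y\<^sup>2" by (simp add: power2_diff)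
      moreover have "0 \<le> x * y" using that by simp
      ultimately show ?thesis by linarith
    qed
    then show "\<exists>N. \<forall>n\<ge>N. norm (Fdeg \<alpha>0 k j lam n * Gy n) \<le> (Fdeg \<alpha>0 k j lam n)\<^sup>2 + (Gy n)\<^sup>2"
      using Fdeg_nonneg G0 by (auto simp: abs_mult)
  qed
  define B where "B = suminf (\<lambda>n. Fdeg \<alpha>0 k j lam n * Gy n)"
  show ?thesis
  proof (rule nonneg_bdd_above_summable_on)
    show "0 \<le> hE X" for X by (rule hE_nonneg)
    show "bdd_above (sum hE ` {F. F \<subseteq> UNIV \<and> finite F})"
    proof (rule bdd_aboveI2)
      fix F :: "tidx set" assume F: "F \<in> {F. F \<subseteq> UNIV \<and> finite F}"
      then have fF: "finite F" by simp
      define N where "N = Max (insert 0 (degX ` F))"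
      have sub: "{X\<in>F. hE X \<noteq> 0} \<subseteq> (\<Union>n\<in>{..N}. Block n)"
      proof
        fix X assume X: "X \<in> {X\<in>F. hE X \<noteq> 0}"
        then have "degX X \<le> N" unfolding N_def using fF by (auto intro: Max_ge)
        moreover have "X \<in> Block (degX X)" by (rule hE_supp) (use X in auto)
        ultimately show "X \<in> (\<Union>n\<in>{..N}. Block n)" by auto
      qed
      have "sum hE F = sum hE {X\<in>F. hE X \<noteq> 0}"
        by (rule sum.mono_neutral_right) (use fF in auto)
      also have "\<dots> \<le> sum hE (\<Union>n\<in>{..N}. Block n)"
        by (rule sum_mono2[OF _ sub]) (auto simp: Block_fin hE_nonneg)
      also have "\<dots> = (\<Sum>n\<in>{..N}. sum hE (Block n))"
        by (rule sum.UNION_disjoint) (auto simp: Block_fin dest: Block_disj)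
      also have "\<dots> = (\<Sum>n\<in>{..N}. Fdeg \<alpha>0 k j lam n * Gy n)" by (simp add: Block_sum)
      also have "\<dots> \<le> B" unfolding B_def
        by (rule sum_le_suminf[OF sp]) (auto intro: mult_nonneg_nonneg Fdeg_nonneg G0)
      finally show "sum hE F \<le> B" .
    qed
  qed
qed

end



declare of_nat_sum_mset[simp del]

lemma summable_on_finsum:
  fixes f :: "'i \<Rightarrow> 'a \<Rightarrow> real"
  assumes "finite I" "\<And>i. i \<in> I \<Longrightarrow> f i summable_on A"
  shows "(\<lambda>x. \<Sum>i\<in>I. f i x) summable_on A"
  using assms
proof (induction I rule: finite_induct)
  case empty then show ?case by simp
next
  case (insert i I)
  then show ?case by (simp add: summable_on_add)
qed

lemma Dom_fin: "\<Psi> \<in> Dom \<Longrightarrow> finite {e. \<Psi> e \<noteq> 0}"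
  unfolding Dom_def by simp

lemma Dom_j: "\<Psi> \<in> Dom \<Longrightarrow> \<Psi> e \<noteq> 0 \<Longrightarrow> fst (fst e) = fst (snd e)"
  unfolding Dom_def by (cases e) auto

lemma sum_single_supp:
  fixes f :: "real \<Rightarrow> real"
  assumes "finite T" "\<And>t. t \<noteq> \<tau> \<Longrightarrow> f t = 0" "\<And>t. 0 \<le> f t"
  shows "(\<Sum>t\<in>T. f t) \<le> f \<tau>"
proof -
  have "(\<Sum>t\<in>T. f t) = (\<Sum>t\<in>T \<inter> {\<tau>}. f t)"
    by (rule sum.mono_neutral_right) (use assms in auto)
  also have "\<dots> \<le> (\<Sum>t\<in>{\<tau>}. f t)" by (rule sum_mono2) (use assms in auto)
  finally show ?thesis by simp
qed

lemma goodser_Phi: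
  assumes a2: "(of_int k * \<alpha>0)\<^sup>2 < 1/2" and D: "\<Psi> \<in> Dom"
  shows "goodser (Phi_term \<alpha>0 k s \<Psi>)"
proof -
  define S where "S = {e. \<Psi> e \<noteq> 0}"
  have fS: "finite S" using Dom_fin[OF D] by (simp add: S_def)
  define tE where "tE e X = tau \<alpha>0 k (fst (fst e)) (snd (fst e)) (degX X)" for e :: tidx and X :: tidx
  define GG where "GG e X = cmod (Ybasis \<alpha>0 k (tE e X) (fst e) (fst X)) *
      cmod (Ybasis \<alpha>0 k (tE e X - of_int s) (snd e) (snd X))" for e X
  define g where "g X = (\<Sum>e\<in>S. cmod (\<Psi> e) * GG e X)" for X
  let ?v = "Phi_term \<alpha>0 k s \<Psi>"
  have vexp: "?v t X = (\<Sum>e\<in>S. \<Psi> e * (Ybasis \<alpha>0 k t (fst e) (fst X) * Ybasis \<alpha>0 k (t - of_int s) (snd e) (snd X)))" for t X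
    by (rule Phi_expand[OF fS]) (simp add: S_def)
  have Ynz: "t = tE e X" if "Ybasis \<alpha>0 k t (fst e) (fst X) \<noteq> 0" for t e X
  proof -
    obtain j lam where e: "fst e = (j, lam)" by fastforce
    obtain j' a where x: "fst X = (j', a)" by fastforce
    show ?thesis using Y_nz[of \<alpha>0 k t j lam j' a] that unfolding tE_def degX_def e x by simp
  qed
  have fin: "finite {t. ?v t X \<noteq> 0}" for X
  proof -
    have "{t. ?v t X \<noteq> 0} \<subseteq> (\<lambda>e. tE e X) ` S"
    proof
      fix t assume "t \<in> {t. ?v t X \<noteq> 0}"
      then have "?v t X \<noteq> 0" by simp
      then obtain e where "e \<in> S" "\<Psi> e * (Ybasis \<alpha>0 k t (fst e) (fst X) * Ybasis \<alpha>0 k (t - of_int s) (snd e) (snd X)) \<noteq> 0"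
        unfolding vexp by (rule sum.not_neutral_contains_not_neutral)
      then have "e \<in> S" "t = tE e X" using Ynz by auto
      then show "t \<in> (\<lambda>e. tE e X) ` S" by blast
    qed
    then show ?thesis using fS finite_surj by blast
  qed
  have bound: "(\<Sum>t\<in>{t. ?v t X \<noteq> 0}. cmod (?v t X)) \<le> g X" for X
  proof -
    let ?T = "{t. ?v t X \<noteq> 0}"
    let ?f = "\<lambda>e t. cmod (Ybasis \<alpha>0 k t (fst e) (fst X)) * cmod (Ybasis \<alpha>0 k (t - of_int s) (snd e) (snd X))"
    have "(\<Sum>t\<in>?T. cmod (?v t X)) \<le> (\<Sum>t\<in>?T. \<Sum>e\<in>S. cmod (\<Psi> e) * ?f e t)"
    proof (rule sum_mono)
      fix t
      have "cmod (?v t X) \<le> (\<Sum>e\<in>S. cmod (\<Psi> e * (Ybasis \<alpha>0 k t (fst e) (fst X) * Ybasis \<alpha>0 k (t - of_int s) (snd e) (snd X))))"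
        unfolding vexp by (rule norm_sum)
      then show "cmod (?v t X) \<le> (\<Sum>e\<in>S. cmod (\<Psi> e) * ?f e t)" by (simp add: norm_mult)
    qed
    also have "\<dots> = (\<Sum>e\<in>S. cmod (\<Psi> e) * (\<Sum>t\<in>?T. ?f e t))"
      by (subst sum.swap) (simp add: sum_distrib_left)
    also have "\<dots> \<le> g X" unfolding g_def
    proof (rule sum_mono, rule mult_left_mono)
      fix e
      show "(\<Sum>t\<in>?T. ?f e t) \<le> GG e X" unfolding GG_def
      proof (rule sum_single_supp[OF fin])
        fix t assume "t \<noteq> tE e X"
        then have "Ybasis \<alpha>0 k t (fst e) (fst X) = 0" using Ynz[of t e X] by blast
        then show "cmod (Ybasis \<alpha>0 k t (fst e) (fst X)) * cmod (Ybasis \<alpha>0 k (t - of_int s) (snd e) (snd X)) = 0" by simp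
      qed simp
    qed simp
    finally show ?thesis .
  qed
  define hh where "hh e = hE \<alpha>0 k (fst (fst e)) s (snd (fst e)) (snd (snd e))" for e :: tidx
  have hh_eq: "tweight X * (GG e X)\<^sup>2 = hh e X" if "e \<in> S" for e X
  proof -
    obtain j lam j' mu where e: "e = ((j, lam), (j', mu))" by (metis prod.collapse)
    have "j = j'" using Dom_j[OF D, of e] that unfolding S_def e by simp
    then show ?thesis unfolding hh_def hE_def GG_def tE_def e by simp
  qed
  have hh_s: "hh e summable_on UNIV" if "e \<in> S" for e
    unfolding hh_def by (intro hE_summable sqs_Fdeg a2)
  have big: "(\<lambda>X. \<Sum>e\<in>S. (real (card S) * (cmod (\<Psi> e))\<^sup>2) * hh e X) summable_on UNIV"
    by (intro summable_on_finsum fS summable_on_cmult_right hh_s)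
  have "(\<lambda>X. tweight X * (g X)\<^sup>2) summable_on UNIV"
  proof (rule summable_on_comparison_test[OF big])
    fix X
    show "0 \<le> tweight X * (g X)\<^sup>2" by (simp add: tweight_nonneg)
    have "(g X)\<^sup>2 \<le> (\<Sum>e\<in>S. (cmod (\<Psi> e) * GG e X)\<^sup>2) * real (card S)"
      unfolding g_def by (rule sum_squared_le_sum_of_squares)
    then have "tweight X * (g X)\<^sup>2 \<le> tweight X * ((\<Sum>e\<in>S. (cmod (\<Psi> e) * GG e X)\<^sup>2) * real (card S))"
      by (rule mult_left_mono[OF _ tweight_nonneg])
    also have "\<dots> = (\<Sum>e\<in>S. (real (card S) * (cmod (\<Psi> e))\<^sup>2) * (tweight X * (GG e X)\<^sup>2))"
      by (simp add: sum_distrib_left sum_distrib_right power_mult_distrib algebra_simps)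
    also have "\<dots> = (\<Sum>e\<in>S. (real (card S) * (cmod (\<Psi> e))\<^sup>2) * hh e X)"
      by (rule sum.cong) (simp_all add: hh_eq)
    finally show "tweight X * (g X)\<^sup>2 \<le> (\<Sum>e\<in>S. (real (card S) * (cmod (\<Psi> e))\<^sup>2) * hh e X)" .
  qed
  then show ?thesis unfolding goodser_def using fin bound by blast
qed

lemma countable_Phi:
  assumes D: "\<Psi> \<in> Dom"
  shows "countable {t. Phi_term \<alpha>0 k s \<Psi> t \<noteq> (\<lambda>_. 0)}"
proof -
  define S where "S = {e. \<Psi> e \<noteq> 0}"
  have fS: "finite S" using Dom_fin[OF D] by (simp add: S_def)
  have "{t. Phi_term \<alpha>0 k s \<Psi> t \<noteq> (\<lambda>_. 0)} \<subseteq> (\<Union>e\<in>S. range (\<lambda>n. tau \<alpha>0 k (fst (fst e)) (snd (fst e)) n))"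
  proof
    fix t assume "t \<in> {t. Phi_term \<alpha>0 k s \<Psi> t \<noteq> (\<lambda>_. 0)}"
    then have "\<exists>X. Phi_term \<alpha>0 k s \<Psi> t X \<noteq> 0"
    proof (rule contrapos_pp)
      assume "\<not> (\<exists>X. Phi_term \<alpha>0 k s \<Psi> t X \<noteq> 0)"
      then show "t \<notin> {t. Phi_term \<alpha>0 k s \<Psi> t \<noteq> (\<lambda>_. 0)}" by (simp add: fun_eq_iff)
    qed
    then obtain X where X: "Phi_term \<alpha>0 k s \<Psi> t X \<noteq> 0" by blast
    have vexp: "Phi_term \<alpha>0 k s \<Psi> t X = (\<Sum>e\<in>S. \<Psi> e * (Ybasis \<alpha>0 k t (fst e) (fst X) * Ybasis \<alpha>0 k (t - of_int s) (snd e) (snd X)))"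
      by (rule Phi_expand[OF fS]) (simp add: S_def)
    obtain e where e: "e \<in> S" "\<Psi> e * (Ybasis \<alpha>0 k t (fst e) (fst X) * Ybasis \<alpha>0 k (t - of_int s) (snd e) (snd X)) \<noteq> 0"
      using X unfolding vexp by (rule sum.not_neutral_contains_not_neutral)
    obtain j lam where e1: "fst e = (j, lam)" by fastforce
    obtain j' a where x: "fst X = (j', a)" by fastforce
    have "Ybasis \<alpha>0 k t (j, lam) (j', a) \<noteq> 0" using e(2) unfolding e1 x by simp
    then have "t = tau \<alpha>0 k j lam (sum_mset a)" using Y_nz[of \<alpha>0 k t j lam j' a] by blast
    then have "t \<in> range (\<lambda>n. tau \<alpha>0 k (fst (fst e)) (snd (fst e)) n)" using e1 by simp
    then show "t \<in> (\<Union>e\<in>S. range (\<lambda>n. tau \<alpha>0 k (fst (fst e)) (snd (fst e)) n))" using e(1) by blast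
  qed
  moreover have "countable (\<Union>e\<in>S. range (\<lambda>n. tau \<alpha>0 k (fst (fst e)) (snd (fst e)) n))"
    by (rule countable_UN[OF countable_finite[OF fS]]) simp
  ultimately show ?thesis by (rule countable_subset)
qed



lemma goodser_fin: "goodser v \<Longrightarrow> finite {t. v t X \<noteq> 0}"
  unfolding goodser_def by blast

lemma Phi_lin:
  assumes "\<Psi>1 \<in> Dom" "\<Psi>2 \<in> Dom"
  shows "Phi_term \<alpha>0 k s (\<lambda>x. a * \<Psi>1 x + b * \<Psi>2 x) t X = a * Phi_term \<alpha>0 k s \<Psi>1 t X + b * Phi_term \<alpha>0 k s \<Psi>2 t X"
proof -
  define S where "S = {e. \<Psi>1 e \<noteq> 0} \<union> {e. \<Psi>2 e \<noteq> 0}"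
  have fS: "finite S" unfolding S_def using Dom_fin[OF assms(1)] Dom_fin[OF assms(2)] by simp
  define K where "K e = Ybasis \<alpha>0 k t (fst e) (fst X) * Ybasis \<alpha>0 k (t - of_int s) (snd e) (snd X)" for e
  have "Phi_term \<alpha>0 k s (\<lambda>x. a * \<Psi>1 x + b * \<Psi>2 x) t X = (\<Sum>e\<in>S. (a * \<Psi>1 e + b * \<Psi>2 e) * K e)"
    unfolding K_def by (rule Phi_expand[OF fS]) (auto simp: S_def)
  moreover have "Phi_term \<alpha>0 k s \<Psi>1 t X = (\<Sum>e\<in>S. \<Psi>1 e * K e)"
    unfolding K_def by (rule Phi_expand[OF fS]) (auto simp: S_def)
  moreover have "Phi_term \<alpha>0 k s \<Psi>2 t X = (\<Sum>e\<in>S. \<Psi>2 e * K e)"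
    unfolding K_def by (rule Phi_expand[OF fS]) (auto simp: S_def)
  ultimately show ?thesis by (simp add: sum.distrib sum_distrib_left algebra_simps)
qed

lemma sq_bound:
  assumes "\<bar>of_int k * \<alpha>0\<bar> < 1 / sqrt 2"
  shows "(of_int k * \<alpha>0)\<^sup>2 < (1/2::real)"
proof -
  have "\<bar>of_int k * \<alpha>0\<bar>\<^sup>2 < (1 / sqrt 2)\<^sup>2"
    by (rule power_strict_mono[OF assms]) auto
  then show ?thesis by (simp add: power_divide)
qed

theorem mainTheorem3:
  fixes \<alpha>0 :: real and k :: int
  assumes "0 < \<bar>\<alpha>0\<bar>" and "\<bar>\<alpha>0\<bar> \<le> 1"
    and "\<bar>of_int k * \<alpha>0\<bar> < 1 / sqrt 2"
  shows "(\<forall>s::int. \<forall>\<Psi>\<in>Dom. countable {t. Phi_term \<alpha>0 k s \<Psi> t \<noteq> (\<lambda>_. 0)}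
            \<and> (\<exists>L. norm_conv (Phi_term \<alpha>0 k s \<Psi>) L))
       \<and> (\<forall>s::int. \<forall>\<Psi>\<in>Dom. countable {t. Phi_term \<alpha>0 (- k) s \<Psi> t \<noteq> (\<lambda>_. 0)}
            \<and> (\<exists>L. norm_conv (Phi_term \<alpha>0 (- k) s \<Psi>) L))
       \<and> (\<forall>s::int. \<exists>\<Phi> :: tvec \<Rightarrow> tvec.
            (\<forall>\<Psi>\<in>Dom. norm_conv (\<lambda>t. \<lambda>x. Phi_term \<alpha>0 k s \<Psi> t x + Phi_term \<alpha>0 (- k) s \<Psi> t x) (\<Phi> \<Psi>))
          \<and> (\<forall>\<Psi>1\<in>Dom. \<forall>\<Psi>2\<in>Dom. \<forall>a b.
               \<Phi> (\<lambda>x. a * \<Psi>1 x + b * \<Psi>2 x) = (\<lambda>x. a * \<Phi> \<Psi>1 x + b * \<Phi> \<Psi>2 x)))"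
proof -
  have a1: "(of_int k * \<alpha>0)\<^sup>2 < (1/2::real)" by (rule sq_bound[OF assms(3)])
  have a2: "(of_int (- k) * \<alpha>0)\<^sup>2 < (1/2::real)" using a1 by simp
  have G1: "goodser (Phi_term \<alpha>0 k s \<Psi>)" if "\<Psi> \<in> Dom" for s \<Psi> by (rule goodser_Phi[OF a1 that])
  have G2: "goodser (Phi_term \<alpha>0 (- k) s \<Psi>)" if "\<Psi> \<in> Dom" for s \<Psi> by (rule goodser_Phi[OF a2 that])
  have P1: "\<forall>s::int. \<forall>\<Psi>\<in>Dom. countable {t. Phi_term \<alpha>0 k s \<Psi> t \<noteq> (\<lambda>_. 0)}
            \<and> (\<exists>L. norm_conv (Phi_term \<alpha>0 k s \<Psi>) L)"
    using countable_Phi goodser_norm_conv[OF G1] by blast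
  have P2: "\<forall>s::int. \<forall>\<Psi>\<in>Dom. countable {t. Phi_term \<alpha>0 (- k) s \<Psi> t \<noteq> (\<lambda>_. 0)}
            \<and> (\<exists>L. norm_conv (Phi_term \<alpha>0 (- k) s \<Psi>) L)"
    using countable_Phi goodser_norm_conv[OF G2] by blast
  have P3: "\<exists>\<Phi> :: tvec \<Rightarrow> tvec.
            (\<forall>\<Psi>\<in>Dom. norm_conv (\<lambda>t. \<lambda>x. Phi_term \<alpha>0 k s \<Psi> t x + Phi_term \<alpha>0 (- k) s \<Psi> t x) (\<Phi> \<Psi>))
          \<and> (\<forall>\<Psi>1\<in>Dom. \<forall>\<Psi>2\<in>Dom. \<forall>a b.
               \<Phi> (\<lambda>x. a * \<Psi>1 x + b * \<Psi>2 x) = (\<lambda>x. a * \<Phi> \<Psi>1 x + b * \<Phi> \<Psi>2 x))" for s :: int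
  proof (intro exI conjI ballI allI)
    define W where "W \<Psi> t x = Phi_term \<alpha>0 k s \<Psi> t x + Phi_term \<alpha>0 (- k) s \<Psi> t x" for \<Psi> t x
    let ?\<Phi> = "\<lambda>\<Psi> X. infsum (\<lambda>t. Phi_term \<alpha>0 k s \<Psi> t X + Phi_term \<alpha>0 (- k) s \<Psi> t X) UNIV"
    have GW: "goodser (W \<Psi>)" if "\<Psi> \<in> Dom" for \<Psi>
      unfolding W_def by (rule goodser_add[OF G1[OF that] G2[OF that]])
    fix \<Psi> assume "\<Psi> \<in> Dom"
    show "norm_conv (\<lambda>t x. Phi_term \<alpha>0 k s \<Psi> t x + Phi_term \<alpha>0 (- k) s \<Psi> t x) (?\<Phi> \<Psi>)"
      using goodser_norm_conv[OF GW[OF \<open>\<Psi> \<in> Dom\<close>]] unfolding W_def .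
  next
    define W where "W \<Psi> t x = Phi_term \<alpha>0 k s \<Psi> t x + Phi_term \<alpha>0 (- k) s \<Psi> t x" for \<Psi> t x
    have GW: "goodser (W \<Psi>)" if "\<Psi> \<in> Dom" for \<Psi>
      unfolding W_def by (rule goodser_add[OF G1[OF that] G2[OF that]])
    fix \<Psi>1 \<Psi>2 a b assume D1: "\<Psi>1 \<in> Dom" and D2: "\<Psi>2 \<in> Dom"
    have Wlin: "W (\<lambda>x. a * \<Psi>1 x + b * \<Psi>2 x) t X = a * W \<Psi>1 t X + b * W \<Psi>2 t X" for t X
      unfolding W_def Phi_lin[OF D1 D2] by (simp add: algebra_simps)
    have s1: "(\<lambda>t. W \<Psi>1 t X) summable_on UNIV" for X
      by (rule summable_finite_supp) (rule goodser_fin[OF GW[OF D1]])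
    have s2: "(\<lambda>t. W \<Psi>2 t X) summable_on UNIV" for X
      by (rule summable_finite_supp) (rule goodser_fin[OF GW[OF D2]])
    show "(\<lambda>X. infsum (\<lambda>t. Phi_term \<alpha>0 k s (\<lambda>x. a * \<Psi>1 x + b * \<Psi>2 x) t X + Phi_term \<alpha>0 (- k) s (\<lambda>x. a * \<Psi>1 x + b * \<Psi>2 x) t X) UNIV)
       = (\<lambda>x. a * infsum (\<lambda>t. Phi_term \<alpha>0 k s \<Psi>1 t x + Phi_term \<alpha>0 (- k) s \<Psi>1 t x) UNIV +
              b * infsum (\<lambda>t. Phi_term \<alpha>0 k s \<Psi>2 t x + Phi_term \<alpha>0 (- k) s \<Psi>2 t x) UNIV)"
    proof (rule ext)
      fix X
      have "infsum (\<lambda>t. W (\<lambda>x. a * \<Psi>1 x + b * \<Psi>2 x) t X) UNIV = infsum (\<lambda>t. a * W \<Psi>1 t X + b * W \<Psi>2 t X) UNIV"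
        by (simp add: Wlin)
      also have "\<dots> = infsum (\<lambda>t. a * W \<Psi>1 t X) UNIV + infsum (\<lambda>t. b * W \<Psi>2 t X) UNIV"
        by (intro infsum_add summable_on_cmult_right s1 s2)
      also have "\<dots> = a * infsum (\<lambda>t. W \<Psi>1 t X) UNIV + b * infsum (\<lambda>t. W \<Psi>2 t X) UNIV"
        by (simp add: infsum_cmult_right')
      finally show "infsum (\<lambda>t. Phi_term \<alpha>0 k s (\<lambda>x. a * \<Psi>1 x + b * \<Psi>2 x) t X + Phi_term \<alpha>0 (- k) s (\<lambda>x. a * \<Psi>1 x + b * \<Psi>2 x) t X) UNIV
       = a * infsum (\<lambda>t. Phi_term \<alpha>0 k s \<Psi>1 t X + Phi_term \<alpha>0 (- k) s \<Psi>1 t X) UNIV +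
              b * infsum (\<lambda>t. Phi_term \<alpha>0 k s \<Psi>2 t X + Phi_term \<alpha>0 (- k) s \<Psi>2 t X) UNIV"
        unfolding W_def .
    qed
  qed
  show ?thesis using P1 P2 P3 by blast
qed


end
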